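(* Let $\mathbb{X}$ be a Cartesian left additive category. If $f_\bullet:A\to B$ and $g_\bullet:B\to C$ are $\mathsf{D}$-sequences, then $f_\bullet\ast g_\bullet$ is a $\mathsf{D}$-sequence.
   Context: Composition in diagrammatic order. A Cartesian left additive category: finite products, hom-sets commutative monoids with $f(g+h)=fg+fh$, $f0=0$, projections additive. $\mathsf{P}(X)=X\times X$, $\mathsf{P}(f)=f\times f$. A pre-$\mathsf{D}$-sequence $f_\bullet:A\to B$ is $(f_n)_{n\ge0}$ with $f_n:\mathsf{P}^n(A)\to B$; $(h\cdot f_\bullet)_n=\mathsf{P}^n(h)f_n$; $\mathsf{T}(f_\bullet)_n=\langle\mathsf{P}^n(\pi_0)f_n,f_{n+1}\rangle$; $\mathsf{D}[f_\bullet]_n=f_{n+1}$; sums and $0_\bullet$ pointwise; composition $(f_\bullet\ast g_\bullet)_n=\mathsf{T}^n(f_\bullet)_0g_n$. A $\mathsf{D}$-sequence is a pre-$\mathsf{D}$-sequence such that for all $n$, with $X=\mathsf{P}^n(A)$: $\langle1,0\rangle\cdot\mathsf{D}^{n+1}[f_\bullet]=0_\bullet$ ($\langle1,0\rangle:X\to X\times X$); $(1\times(\pi_0+\pi_1))\cdot\mathsf{D}^{n+1}[f_\bullet]=(1\times\pi_0)\cdot\mathsf{D}^{n+1}[f_\bullet]+(1\times\pi_1)\cdot\mathsf{D}^{n+1}[f_\bullet]$ (maps $X\times(X\times X)\to X\times X$); $\ell\cdot\mathsf{D}^{n+2}[f_\bullet]=\mathsf{D}^{n+1}[f_\bullet]$,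 $\ell=\langle1,0\rangle\times\langle0,1\rangle:X\times X\to(X\times X)\times(X\times X)$; $c\cdot\mathsf{D}^{n+2}[f_\bullet]=\mathsf{D}^{n+2}[f_\bullet]$, $c=\langle\langle\pi_0\pi_0,\pi_1\pi_0\rangle,\langle\pi_0\pi_1,\pi_1\pi_1\rangle\rangle$. *)

theory Defs
  imports Main
begin

text \<open>A category with chosen finite products and left additive structure.
  Composition is written in diagrammatic order: cmp C f g means "first f, then g".\<close>

record ('o, 'm) cla_struct =
  Ob   :: "'o set"
  Hom  :: "'o \<Rightarrow> 'o \<Rightarrow> 'm set"
  cmp  :: "'m \<Rightarrow> 'm \<Rightarrow> 'm"
  ide  :: "'o \<Rightarrow> 'm"
  trm  :: "'o"
  bang :: "'o \<Rightarrow> 'm"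
  prd  :: "'o \<Rightarrow> 'o \<Rightarrow> 'o"
  pr0  :: "'o \<Rightarrow> 'o \<Rightarrow> 'm"
  pr1  :: "'o \<Rightarrow> 'o \<Rightarrow> 'm"
  pair :: "'m \<Rightarrow> 'm \<Rightarrow> 'm"
  pls  :: "'m \<Rightarrow> 'm \<Rightarrow> 'm"
  zro  :: "'o \<Rightarrow> 'o \<Rightarrow> 'm"

locale cartesian_left_additive =
  fixes C :: "('o, 'm) cla_struct"
  assumes hom_ob: "f \<in> Hom C A B \<Longrightarrow> A \<in> Ob C \<and> B \<in> Ob C"
    and hom_disj: "f \<in> Hom C A B \<Longrightarrow> f \<in> Hom C A' B' \<Longrightarrow> A = A' \<and> B = B'"
    and cmp_hom: "f \<in> Hom C A B \<Longrightarrow> g \<in> Hom C B D \<Longrightarrow> cmp C f g \<in> Hom C A D"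
    and cmp_assoc: "f \<in> Hom C A B \<Longrightarrow> g \<in> Hom C B D \<Longrightarrow> h \<in> Hom C D E \<Longrightarrow>
        cmp C (cmp C f g) h = cmp C f (cmp C g h)"
    and ide_hom: "A \<in> Ob C \<Longrightarrow> ide C A \<in> Hom C A A"
    and ide_left: "f \<in> Hom C A B \<Longrightarrow> cmp C (ide C A) f = f"
    and ide_right: "f \<in> Hom C A B \<Longrightarrow> cmp C f (ide C B) = f"
    and trm_ob: "trm C \<in> Ob C"
    and bang_hom: "A \<in> Ob C \<Longrightarrow> bang C A \<in> Hom C A (trm C)"
    and bang_uniq: "f \<in> Hom C A (trm C) \<Longrightarrow> f = bang C A"
    and prd_ob: "A \<in> Ob C \<Longrightarrow> B \<in> Ob C \<Longrightarrow> prd C A B \<in> Ob C"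
    and pr0_hom: "A \<in> Ob C \<Longrightarrow> B \<in> Ob C \<Longrightarrow> pr0 C A B \<in> Hom C (prd C A B) A"
    and pr1_hom: "A \<in> Ob C \<Longrightarrow> B \<in> Ob C \<Longrightarrow> pr1 C A B \<in> Hom C (prd C A B) B"
    and pair_hom: "f \<in> Hom C X A \<Longrightarrow> g \<in> Hom C X B \<Longrightarrow> pair C f g \<in> Hom C X (prd C A B)"
    and pair_pr0: "f \<in> Hom C X A \<Longrightarrow> g \<in> Hom C X B \<Longrightarrow> cmp C (pair C f g) (pr0 C A B) = f"
    and pair_pr1: "f \<in> Hom C X A \<Longrightarrow> g \<in> Hom C X B \<Longrightarrow> cmp C (pair C f g) (pr1 C A B) = g"
    and pair_uniq: "h \<in> Hom C X (prd C A B) \<Longrightarrow> A \<in> Ob C \<Longrightarrow> B \<in> Ob C \<Longrightarrow>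
        pair C (cmp C h (pr0 C A B)) (cmp C h (pr1 C A B)) = h"
    and pls_hom: "f \<in> Hom C A B \<Longrightarrow> g \<in> Hom C A B \<Longrightarrow> pls C f g \<in> Hom C A B"
    and zro_hom: "A \<in> Ob C \<Longrightarrow> B \<in> Ob C \<Longrightarrow> zro C A B \<in> Hom C A B"
    and pls_assoc: "f \<in> Hom C A B \<Longrightarrow> g \<in> Hom C A B \<Longrightarrow> h \<in> Hom C A B \<Longrightarrow>
        pls C (pls C f g) h = pls C f (pls C g h)"
    and pls_comm: "f \<in> Hom C A B \<Longrightarrow> g \<in> Hom C A B \<Longrightarrow> pls C f g = pls C g f"
    and pls_zro: "f \<in> Hom C A B \<Longrightarrow> pls C f (zro C A B) = f"
    and cmp_pls: "f \<in> Hom C A B \<Longrightarrow> g \<in> Hom C B D \<Longrightarrow> h \<in> Hom C B D \<Longrightarrow>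
        cmp C f (pls C g h) = pls C (cmp C f g) (cmp C f h)"
    and cmp_zro: "f \<in> Hom C A B \<Longrightarrow> D \<in> Ob C \<Longrightarrow> cmp C f (zro C B D) = zro C A D"
    and pr0_pls: "f \<in> Hom C X (prd C A B) \<Longrightarrow> g \<in> Hom C X (prd C A B) \<Longrightarrow> A \<in> Ob C \<Longrightarrow> B \<in> Ob C \<Longrightarrow>
        cmp C (pls C f g) (pr0 C A B) = pls C (cmp C f (pr0 C A B)) (cmp C g (pr0 C A B))"
    and pr1_pls: "f \<in> Hom C X (prd C A B) \<Longrightarrow> g \<in> Hom C X (prd C A B) \<Longrightarrow> A \<in> Ob C \<Longrightarrow> B \<in> Ob C \<Longrightarrow>
        cmp C (pls C f g) (pr1 C A B) = pls C (cmp C f (pr1 C A B)) (cmp C g (pr1 C A B))"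
    and pr0_zro: "X \<in> Ob C \<Longrightarrow> A \<in> Ob C \<Longrightarrow> B \<in> Ob C \<Longrightarrow>
        cmp C (zro C X (prd C A B)) (pr0 C A B) = zro C X A"
    and pr1_zro: "X \<in> Ob C \<Longrightarrow> A \<in> Ob C \<Longrightarrow> B \<in> Ob C \<Longrightarrow>
        cmp C (zro C X (prd C A B)) (pr1 C A B) = zro C X B"

text \<open>The functor P: P(X) = X \<times> X, P(f) = f \<times> f (f with source A).\<close>

definition Pob :: "('o, 'm, 'z) cla_struct_scheme \<Rightarrow> 'o \<Rightarrow> 'o" where
  "Pob C A = prd C A A"

definition Pmap :: "('o, 'm, 'z) cla_struct_scheme \<Rightarrow> 'o \<Rightarrow> 'm \<Rightarrow> 'm" where
  "Pmap C A f = pair C (cmp C (pr0 C A A) f) (cmp C (pr1 C A A) f)"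

definition Pnob :: "('o, 'm, 'z) cla_struct_scheme \<Rightarrow> nat \<Rightarrow> 'o \<Rightarrow> 'o" where
  "Pnob C n A = (Pob C ^^ n) A"

fun Pnmap :: "('o, 'm, 'z) cla_struct_scheme \<Rightarrow> nat \<Rightarrow> 'o \<Rightarrow> 'm \<Rightarrow> 'm" where
  "Pnmap C 0 A f = f"
| "Pnmap C (Suc n) A f = Pmap C (Pnob C n A) (Pnmap C n A f)"

definition pre_D_seq :: "('o, 'm, 'z) cla_struct_scheme \<Rightarrow> 'o \<Rightarrow> 'o \<Rightarrow> (nat \<Rightarrow> 'm) \<Rightarrow> bool" where
  "pre_D_seq C A B f \<longleftrightarrow> (\<forall>n. f n \<in> Hom C (Pnob C n A) B)"

definition act :: "('o, 'm, 'z) cla_struct_scheme \<Rightarrow> 'o \<Rightarrow> 'm \<Rightarrow> (nat \<Rightarrow> 'm) \<Rightarrow> (nat \<Rightarrow> 'm)" where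
  "act C A h f = (\<lambda>n. cmp C (Pnmap C n A h) (f n))"

definition Tseq :: "('o, 'm, 'z) cla_struct_scheme \<Rightarrow> 'o \<Rightarrow> (nat \<Rightarrow> 'm) \<Rightarrow> (nat \<Rightarrow> 'm)" where
  "Tseq C A f = (\<lambda>n. pair C (cmp C (Pnmap C n (Pob C A) (pr0 C A A)) (f n)) (f (Suc n)))"

fun Titer :: "('o, 'm, 'z) cla_struct_scheme \<Rightarrow> nat \<Rightarrow> 'o \<Rightarrow> (nat \<Rightarrow> 'm) \<Rightarrow> (nat \<Rightarrow> 'm)" where
  "Titer C 0 A f = f"
| "Titer C (Suc k) A f = Tseq C (Pnob C k A) (Titer C k A f)"

definition Dk :: "nat \<Rightarrow> (nat \<Rightarrow> 'm) \<Rightarrow> (nat \<Rightarrow> 'm)" where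
  "Dk k f = (\<lambda>n. f (k + n))"

definition seq_add :: "('o, 'm, 'z) cla_struct_scheme \<Rightarrow> (nat \<Rightarrow> 'm) \<Rightarrow> (nat \<Rightarrow> 'm) \<Rightarrow> (nat \<Rightarrow> 'm)" where
  "seq_add C f g = (\<lambda>n. pls C (f n) (g n))"

definition seq_zero :: "('o, 'm, 'z) cla_struct_scheme \<Rightarrow> 'o \<Rightarrow> 'o \<Rightarrow> (nat \<Rightarrow> 'm)" where
  "seq_zero C A B = (\<lambda>n. zro C (Pnob C n A) B)"

text \<open>(f * g)_n = T^n(f)_0 g_n, for f with source A.\<close>
definition seq_comp :: "('o, 'm, 'z) cla_struct_scheme \<Rightarrow> 'o \<Rightarrow> (nat \<Rightarrow> 'm) \<Rightarrow> (nat \<Rightarrow> 'm) \<Rightarrow> (nat \<Rightarrow> 'm)" where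
  "seq_comp C A f g = (\<lambda>n. cmp C (Titer C n A f 0) (g n))"

definition id_times :: "('o, 'm, 'z) cla_struct_scheme \<Rightarrow> 'o \<Rightarrow> 'o \<Rightarrow> 'm \<Rightarrow> 'm" where
  "id_times C X Y g = pair C (cmp C (pr0 C X Y) (ide C X)) (cmp C (pr1 C X Y) g)"

definition D_seq :: "('o, 'm, 'z) cla_struct_scheme \<Rightarrow> 'o \<Rightarrow> 'o \<Rightarrow> (nat \<Rightarrow> 'm) \<Rightarrow> bool" where
  "D_seq C A B f \<longleftrightarrow> pre_D_seq C A B f \<and>
    (\<forall>n. let X = Pnob C n A; Y = Pob C X;
             i0 = pair C (ide C X) (zro C X X);
             i1 = pair C (zro C X X) (ide C X);
             p0 = pr0 C X X; p1 = pr1 C X X;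
             l = pair C (cmp C p0 i0) (cmp C p1 i1);
             c = pair C (pair C (cmp C (pr0 C Y Y) p0) (cmp C (pr1 C Y Y) p0))
                        (pair C (cmp C (pr0 C Y Y) p1) (cmp C (pr1 C Y Y) p1))
         in act C X i0 (Dk (n + 1) f) = seq_zero C X B
          \<and> act C (prd C X Y) (id_times C X Y (pls C p0 p1)) (Dk (n + 1) f)
              = seq_add C (act C (prd C X Y) (id_times C X Y p0) (Dk (n + 1) f))
                          (act C (prd C X Y) (id_times C X Y p1) (Dk (n + 1) f))
          \<and> act C Y l (Dk (n + 2) f) = Dk (n + 1) f
          \<and> act C (Pob C Y) c (Dk (n + 2) f) = Dk (n + 2) f)"

end

theory Submission
  imports Defs
begin

context cartesian_left_additive
begin

definition arr where "arr f \<longleftrightarrow> (\<exists>A B. f \<in> Hom C A B)"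
definition dm where "dm f = (THE A. \<exists>B. f \<in> Hom C A B)"
definition cd where "cd f = (THE B. \<exists>A. f \<in> Hom C A B)"

lemma homD: assumes "f \<in> Hom C A B" shows "arr f" "dm f = A" "cd f = B"
proof -
  show "arr f" using assms arr_def by blast
  show "dm f = A" unfolding dm_def using assms hom_disj by blast
  show "cd f = B" unfolding cd_def using assms hom_disj by blast
qed

lemma arr_hom: "arr f \<Longrightarrow> f \<in> Hom C (dm f) (cd f)"
  unfolding arr_def using homD by blast

lemma hom_iff: "f \<in> Hom C A B \<longleftrightarrow> arr f \<and> dm f = A \<and> cd f = B"
  using homD arr_hom by blast

lemma ob_dm[simp]: "arr f \<Longrightarrow> dm f \<in> Ob C" using arr_hom hom_ob by blast
lemma ob_cd[simp]: "arr f \<Longrightarrow> cd f \<in> Ob C" using arr_hom hom_ob by blast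

lemma arr_cmp[simp]: "arr f \<Longrightarrow> arr g \<Longrightarrow> cd f = dm g \<Longrightarrow> arr (cmp C f g)"
  and dm_cmp[simp]: "arr f \<Longrightarrow> arr g \<Longrightarrow> cd f = dm g \<Longrightarrow> dm (cmp C f g) = dm f"
  and cd_cmp[simp]: "arr f \<Longrightarrow> arr g \<Longrightarrow> cd f = dm g \<Longrightarrow> cd (cmp C f g) = cd g"
  using cmp_hom[of f "dm f" "cd f" g "cd g"] arr_hom hom_iff by metis+

lemma arr_ide[simp]: "A \<in> Ob C \<Longrightarrow> arr (ide C A)"
  and dm_ide[simp]: "A \<in> Ob C \<Longrightarrow> dm (ide C A) = A"
  and cd_ide[simp]: "A \<in> Ob C \<Longrightarrow> cd (ide C A) = A"
  using ide_hom hom_iff by blast+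

lemma prd_ob'[simp]: "A \<in> Ob C \<Longrightarrow> B \<in> Ob C \<Longrightarrow> prd C A B \<in> Ob C" by (rule prd_ob)

lemma arr_pr0[simp]: "A \<in> Ob C \<Longrightarrow> B \<in> Ob C \<Longrightarrow> arr (pr0 C A B)"
  and dm_pr0[simp]: "A \<in> Ob C \<Longrightarrow> B \<in> Ob C \<Longrightarrow> dm (pr0 C A B) = prd C A B"
  and cd_pr0[simp]: "A \<in> Ob C \<Longrightarrow> B \<in> Ob C \<Longrightarrow> cd (pr0 C A B) = A"
  using pr0_hom hom_iff by blast+

lemma arr_pr1[simp]: "A \<in> Ob C \<Longrightarrow> B \<in> Ob C \<Longrightarrow> arr (pr1 C A B)"
  and dm_pr1[simp]: "A \<in> Ob C \<Longrightarrow> B \<in> Ob C \<Longrightarrow> dm (pr1 C A B) = prd C A B"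
  and cd_pr1[simp]: "A \<in> Ob C \<Longrightarrow> B \<in> Ob C \<Longrightarrow> cd (pr1 C A B) = B"
  using pr1_hom hom_iff by blast+

lemma arr_pair[simp]: "arr f \<Longrightarrow> arr g \<Longrightarrow> dm f = dm g \<Longrightarrow> arr (pair C f g)"
  and dm_pair[simp]: "arr f \<Longrightarrow> arr g \<Longrightarrow> dm f = dm g \<Longrightarrow> dm (pair C f g) = dm f"
  and cd_pair[simp]: "arr f \<Longrightarrow> arr g \<Longrightarrow> dm f = dm g \<Longrightarrow> cd (pair C f g) = prd C (cd f) (cd g)"
  using pair_hom[of f "dm f" "cd f" g "cd g"] arr_hom hom_iff by metis+

lemma arr_pls[simp]: "arr f \<Longrightarrow> arr g \<Longrightarrow> dm f = dm g \<Longrightarrow> cd f = cd g \<Longrightarrow> arr (pls C f g)"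
  and dm_pls[simp]: "arr f \<Longrightarrow> arr g \<Longrightarrow> dm f = dm g \<Longrightarrow> cd f = cd g \<Longrightarrow> dm (pls C f g) = dm f"
  and cd_pls[simp]: "arr f \<Longrightarrow> arr g \<Longrightarrow> dm f = dm g \<Longrightarrow> cd f = cd g \<Longrightarrow> cd (pls C f g) = cd f"
  using pls_hom[of f "dm f" "cd f" g] arr_hom hom_iff by metis+

lemma arr_zro[simp]: "A \<in> Ob C \<Longrightarrow> B \<in> Ob C \<Longrightarrow> arr (zro C A B)"
  and dm_zro[simp]: "A \<in> Ob C \<Longrightarrow> B \<in> Ob C \<Longrightarrow> dm (zro C A B) = A"
  and cd_zro[simp]: "A \<in> Ob C \<Longrightarrow> B \<in> Ob C \<Longrightarrow> cd (zro C A B) = B"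
  using zro_hom hom_iff by blast+

lemma assoc[simp]: "arr f \<Longrightarrow> arr g \<Longrightarrow> arr h \<Longrightarrow> cd f = dm g \<Longrightarrow> cd g = dm h \<Longrightarrow>
   cmp C (cmp C f g) h = cmp C f (cmp C g h)"
  using cmp_assoc arr_hom by metis

lemma ide_l[simp]: "arr f \<Longrightarrow> A = dm f \<Longrightarrow> cmp C (ide C A) f = f"
  using ide_left arr_hom by metis
lemma ide_r[simp]: "arr f \<Longrightarrow> B = cd f \<Longrightarrow> cmp C f (ide C B) = f"
  using ide_right arr_hom by metis

lemma pair_p0[simp]: "arr f \<Longrightarrow> arr g \<Longrightarrow> dm f = dm g \<Longrightarrow> A = cd f \<Longrightarrow> B = cd g \<Longrightarrow>
   cmp C (pair C f g) (pr0 C A B) = f"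
  using pair_pr0 arr_hom by metis
lemma pair_p1[simp]: "arr f \<Longrightarrow> arr g \<Longrightarrow> dm f = dm g \<Longrightarrow> A = cd f \<Longrightarrow> B = cd g \<Longrightarrow>
   cmp C (pair C f g) (pr1 C A B) = g"
  using pair_pr1 arr_hom by metis
lemma pair_p0'[simp]: "arr f \<Longrightarrow> arr g \<Longrightarrow> dm f = dm g \<Longrightarrow> A = cd f \<Longrightarrow> B = cd g \<Longrightarrow>
   arr h \<Longrightarrow> dm h = A \<Longrightarrow> cmp C (pair C f g) (cmp C (pr0 C A B) h) = cmp C f h"
proof -
  assume a: "arr f" "arr g" "dm f = dm g" "A = cd f" "B = cd g" "arr h" "dm h = A"
  then have "cmp C (pair C f g) (cmp C (pr0 C A B) h) = cmp C (cmp C (pair C f g) (pr0 C A B)) h"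
    by (subst assoc) auto
  then show ?thesis using a by simp
qed
lemma pair_p1'[simp]: "arr f \<Longrightarrow> arr g \<Longrightarrow> dm f = dm g \<Longrightarrow> A = cd f \<Longrightarrow> B = cd g \<Longrightarrow>
   arr h \<Longrightarrow> dm h = B \<Longrightarrow> cmp C (pair C f g) (cmp C (pr1 C A B) h) = cmp C g h"
proof -
  assume a: "arr f" "arr g" "dm f = dm g" "A = cd f" "B = cd g" "arr h" "dm h = B"
  then have "cmp C (pair C f g) (cmp C (pr1 C A B) h) = cmp C (cmp C (pair C f g) (pr1 C A B)) h"
    by (subst assoc) auto
  then show ?thesis using a by simp
qed

lemma pair_eta[simp]: "arr h \<Longrightarrow> cd h = prd C A B \<Longrightarrow> A \<in> Ob C \<Longrightarrow> B \<in> Ob C \<Longrightarrow>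
   pair C (cmp C h (pr0 C A B)) (cmp C h (pr1 C A B)) = h"
  using pair_uniq arr_hom by metis

lemma pair_eqI: "arr h \<Longrightarrow> arr k \<Longrightarrow> cd h = prd C A B \<Longrightarrow> cd k = prd C A B \<Longrightarrow> A \<in> Ob C \<Longrightarrow> B \<in> Ob C \<Longrightarrow>
   cmp C h (pr0 C A B) = cmp C k (pr0 C A B) \<Longrightarrow> cmp C h (pr1 C A B) = cmp C k (pr1 C A B) \<Longrightarrow> h = k"
  by (metis pair_eta)

lemma pair_cmp[simp]: "arr h \<Longrightarrow> arr a \<Longrightarrow> arr b \<Longrightarrow> cd h = dm a \<Longrightarrow> dm a = dm b \<Longrightarrow>
   cmp C h (pair C a b) = pair C (cmp C h a) (cmp C h b)"
proof -
  assume a: "arr h" "arr a" "arr b" "cd h = dm a" "dm a = dm b"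
  have "pair C (cmp C (cmp C h (pair C a b)) (pr0 C (cd a) (cd b))) (cmp C (cmp C h (pair C a b)) (pr1 C (cd a) (cd b)))
     = cmp C h (pair C a b)" using a by (intro pair_eta) auto
  moreover have "cmp C (cmp C h (pair C a b)) (pr0 C (cd a) (cd b)) = cmp C h a" using a by (subst assoc) auto
  moreover have "cmp C (cmp C h (pair C a b)) (pr1 C (cd a) (cd b)) = cmp C h b" using a by (subst assoc) auto
  ultimately show ?thesis by simp
qed

lemma pair_pr_ide[simp]: "A \<in> Ob C \<Longrightarrow> B \<in> Ob C \<Longrightarrow> pair C (pr0 C A B) (pr1 C A B) = ide C (prd C A B)"
  using pair_eta[of "ide C (prd C A B)" A B] by simp

lemma cmp_pls'[simp]: "arr f \<Longrightarrow> arr g \<Longrightarrow> arr h \<Longrightarrow> cd f = dm g \<Longrightarrow> dm g = dm h \<Longrightarrow> cd g = cd h \<Longrightarrow>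
   cmp C f (pls C g h) = pls C (cmp C f g) (cmp C f h)"
  using cmp_pls arr_hom by metis

lemma cmp_zro'[simp]: "arr f \<Longrightarrow> D \<in> Ob C \<Longrightarrow> B = cd f \<Longrightarrow> cmp C f (zro C B D) = zro C (dm f) D"
  using cmp_zro arr_hom by metis

lemma pr0_pls'[simp]: "arr f \<Longrightarrow> arr g \<Longrightarrow> dm f = dm g \<Longrightarrow> cd f = prd C A B \<Longrightarrow> cd g = prd C A B \<Longrightarrow>
   A \<in> Ob C \<Longrightarrow> B \<in> Ob C \<Longrightarrow>
   cmp C (pls C f g) (pr0 C A B) = pls C (cmp C f (pr0 C A B)) (cmp C g (pr0 C A B))"
  using pr0_pls arr_hom by metis
lemma pr1_pls'[simp]: "arr f \<Longrightarrow> arr g \<Longrightarrow> dm f = dm g \<Longrightarrow> cd f = prd C A B \<Longrightarrow> cd g = prd C A B \<Longrightarrow>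
   A \<in> Ob C \<Longrightarrow> B \<in> Ob C \<Longrightarrow>
   cmp C (pls C f g) (pr1 C A B) = pls C (cmp C f (pr1 C A B)) (cmp C g (pr1 C A B))"
  using pr1_pls arr_hom by metis

lemma pr0_zro'[simp]: "X \<in> Ob C \<Longrightarrow> A \<in> Ob C \<Longrightarrow> B \<in> Ob C \<Longrightarrow>
        cmp C (zro C X (prd C A B)) (pr0 C A B) = zro C X A" by (rule pr0_zro)
lemma pr1_zro'[simp]: "X \<in> Ob C \<Longrightarrow> A \<in> Ob C \<Longrightarrow> B \<in> Ob C \<Longrightarrow>
        cmp C (zro C X (prd C A B)) (pr1 C A B) = zro C X B" by (rule pr1_zro)

lemma pr0_zro''[simp]: "X \<in> Ob C \<Longrightarrow> A \<in> Ob C \<Longrightarrow> B \<in> Ob C \<Longrightarrow> arr h \<Longrightarrow> dm h = A \<Longrightarrow>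
        cmp C (zro C X (prd C A B)) (cmp C (pr0 C A B) h) = cmp C (zro C X A) h"
  by (subst assoc[symmetric]) auto
lemma pr1_zro''[simp]: "X \<in> Ob C \<Longrightarrow> A \<in> Ob C \<Longrightarrow> B \<in> Ob C \<Longrightarrow> arr h \<Longrightarrow> dm h = B \<Longrightarrow>
        cmp C (zro C X (prd C A B)) (cmp C (pr1 C A B) h) = cmp C (zro C X B) h"
  by (subst assoc[symmetric]) auto

lemma pair_zro[simp]: "X \<in> Ob C \<Longrightarrow> A \<in> Ob C \<Longrightarrow> B \<in> Ob C \<Longrightarrow>
   pair C (zro C X A) (zro C X B) = zro C X (prd C A B)"
  using pair_eta[of "zro C X (prd C A B)" A B] by simp

lemma pair_pls[simp]: "arr a \<Longrightarrow> arr b \<Longrightarrow> arr c \<Longrightarrow> arr d \<Longrightarrow> dm a = dm b \<Longrightarrow> dm c = dm a \<Longrightarrow> dm d = dm a \<Longrightarrow>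
   cd c = cd a \<Longrightarrow> cd d = cd b \<Longrightarrow>
   pls C (pair C a b) (pair C c d) = pair C (pls C a c) (pls C b d)"
proof -
  assume as: "arr a" "arr b" "arr c" "arr d" "dm a = dm b" "dm c = dm a" "dm d = dm a" "cd c = cd a" "cd d = cd b"
  have "pair C (cmp C (pls C (pair C a b) (pair C c d)) (pr0 C (cd a) (cd b)))
     (cmp C (pls C (pair C a b) (pair C c d)) (pr1 C (cd a) (cd b))) = pls C (pair C a b) (pair C c d)"
    using as by (intro pair_eta) auto
  then show ?thesis using as by simp
qed

lemma pls_zro'[simp]: "arr f \<Longrightarrow> A = dm f \<Longrightarrow> B = cd f \<Longrightarrow> pls C f (zro C A B) = f"
  using pls_zro arr_hom by metis
lemma zro_pls'[simp]: "arr f \<Longrightarrow> A = dm f \<Longrightarrow> B = cd f \<Longrightarrow> pls C (zro C A B) f = f"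
  using pls_zro pls_comm zro_hom arr_hom by (metis ob_cd ob_dm)


declare Pob_def[simp]

lemma Pnob_0[simp]: "Pnob C 0 A = A" by (simp add: Pnob_def)
lemma Pnob_Suc[simp]: "Pnob C (Suc n) A = prd C (Pnob C n A) (Pnob C n A)" by (simp add: Pnob_def)
lemma Pnob_prd[simp]: "Pnob C n (prd C A A) = prd C (Pnob C n A) (Pnob C n A)"
  by (induction n) auto
lemma Pnob_Pnob[simp]: "Pnob C m (Pnob C k A) = Pnob C (k + m) A"
  by (induction m) auto
lemma Pnob_1[simp]: "Pnob C 1 A = prd C A A" by (simp add: Pnob_def)
lemma Pnob_2[simp]: "Pnob C 2 A = prd C (prd C A A) (prd C A A)" by (simp add: Pnob_def numeral_2_eq_2)
lemma ob_Pnob[simp]: "A \<in> Ob C \<Longrightarrow> Pnob C n A \<in> Ob C" by (induction n) auto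

lemma arr_Pmap[simp]: "arr f \<Longrightarrow> A = dm f \<Longrightarrow> arr (Pmap C A f)"
  and dm_Pmap[simp]: "arr f \<Longrightarrow> A = dm f \<Longrightarrow> dm (Pmap C A f) = prd C A A"
  and cd_Pmap[simp]: "arr f \<Longrightarrow> A = dm f \<Longrightarrow> cd (Pmap C A f) = prd C (cd f) (cd f)"
  by (auto simp: Pmap_def)

lemma Pmap_cmp: "arr f \<Longrightarrow> arr g \<Longrightarrow> A = dm f \<Longrightarrow> B = cd f \<Longrightarrow> dm g = cd f \<Longrightarrow>
  cmp C (Pmap C A f) (Pmap C B g) = Pmap C A (cmp C f g)"
  by (simp add: Pmap_def)

lemma Pmap_ide[simp]: "A \<in> Ob C \<Longrightarrow> Pmap C A (ide C A) = ide C (prd C A A)"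
  by (simp add: Pmap_def)

lemma Pmap_p0[simp]: "arr f \<Longrightarrow> A = dm f \<Longrightarrow> B = cd f \<Longrightarrow> cmp C (Pmap C A f) (pr0 C B B) = cmp C (pr0 C A A) f"
  by (simp add: Pmap_def)
lemma Pmap_p1[simp]: "arr f \<Longrightarrow> A = dm f \<Longrightarrow> B = cd f \<Longrightarrow> cmp C (Pmap C A f) (pr1 C B B) = cmp C (pr1 C A A) f"
  by (simp add: Pmap_def)

lemma arr_Pnmap[simp]: "arr h \<Longrightarrow> A = dm h \<Longrightarrow> arr (Pnmap C n A h)"
  and dm_Pnmap[simp]: "arr h \<Longrightarrow> A = dm h \<Longrightarrow> dm (Pnmap C n A h) = Pnob C n A"
  and cd_Pnmap[simp]: "arr h \<Longrightarrow> A = dm h \<Longrightarrow> cd (Pnmap C n A h) = Pnob C n (cd h)"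
  by (induction n) auto

lemma Pnmap_Suc': "Pnmap C (Suc n) A h = Pnmap C n (prd C A A) (Pmap C A h)"
proof (induction n)
  case 0 then show ?case by simp
next
  case (Suc n)
  have "Pnmap C (Suc (Suc n)) A h = Pmap C (Pnob C (Suc n) A) (Pnmap C (Suc n) A h)" by simp
  also have "... = Pmap C (Pnob C n (prd C A A)) (Pnmap C n (prd C A A) (Pmap C A h))" using Suc by simp
  finally show ?case by simp
qed

lemma Pnmap_add: "Pnmap C (k + m) A h = Pnmap C m (Pnob C k A) (Pnmap C k A h)"
  by (induction m) auto

lemma Pnmap_1[simp]: "Pnmap C 1 A h = Pmap C A h" by simp
lemma Pnmap_2: "Pnmap C 2 A h = Pmap C (prd C A A) (Pmap C A h)" by (simp add: numeral_2_eq_2)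

lemma Pnmap_cmp[simp]: "arr f \<Longrightarrow> arr g \<Longrightarrow> A = dm f \<Longrightarrow> B = cd f \<Longrightarrow> dm g = cd f \<Longrightarrow>
  cmp C (Pnmap C n A f) (Pnmap C n B g) = Pnmap C n A (cmp C f g)"
  by (induction n) (auto simp: Pmap_cmp)

lemma Pnmap_cmp'[simp]: "arr f \<Longrightarrow> arr g \<Longrightarrow> A = dm f \<Longrightarrow> B = cd f \<Longrightarrow> dm g = cd f \<Longrightarrow>
  arr h \<Longrightarrow> dm h = Pnob C n (cd g) \<Longrightarrow>
  cmp C (Pnmap C n A f) (cmp C (Pnmap C n B g) h) = cmp C (Pnmap C n A (cmp C f g)) h"
proof -
  assume a: "arr f" "arr g" "A = dm f" "B = cd f" "dm g = cd f" "arr h" "dm h = Pnob C n (cd g)"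
  have "cmp C (Pnmap C n A f) (cmp C (Pnmap C n B g) h) = cmp C (cmp C (Pnmap C n A f) (Pnmap C n B g)) h"
    by (rule assoc[symmetric]) (use a in simp_all)
  also have "... = cmp C (Pnmap C n A (cmp C f g)) h" using a by (simp only: Pnmap_cmp)
  finally show ?thesis .
qed

lemma Pnmap_ide[simp]: "A \<in> Ob C \<Longrightarrow> Pnmap C n A (ide C A) = ide C (Pnob C n A)"
  by (induction n) auto

definition pseq where "pseq F G = (\<lambda>n. pair C (F n) (G n))"
definition post where "post F k = (\<lambda>n. cmp C (F n) k)"

lemma preD_arr[simp]: "pre_D_seq C X Y F \<Longrightarrow> arr (F m)"
  and preD_dm[simp]: "pre_D_seq C X Y F \<Longrightarrow> dm (F m) = Pnob C m X"
  and preD_cd[simp]: "pre_D_seq C X Y F \<Longrightarrow> cd (F m) = Y"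
  by (metis pre_D_seq_def homD)+

lemma preI: "(\<And>m. arr (F m) \<and> dm (F m) = Pnob C m X \<and> cd (F m) = Y) \<Longrightarrow> pre_D_seq C X Y F"
  unfolding pre_D_seq_def using hom_iff by blast

lemma pre_ob1: "pre_D_seq C X Y F \<Longrightarrow> X \<in> Ob C"
  by (metis Pnob_0 ob_dm preD_arr preD_dm)
lemma pre_ob2: "pre_D_seq C X Y F \<Longrightarrow> Y \<in> Ob C"
  by (metis ob_cd preD_arr preD_cd)


lemma pre_act: "pre_D_seq C X Y F \<Longrightarrow> arr h \<Longrightarrow> dm h = X' \<Longrightarrow> cd h = X \<Longrightarrow> pre_D_seq C X' Y (act C X' h F)"
  by (rule preI) (simp add: act_def)
lemma pre_pseq: "pre_D_seq C X Y F \<Longrightarrow> pre_D_seq C X Y' G \<Longrightarrow> pre_D_seq C X (prd C Y Y') (pseq F G)"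
  by (rule preI) (simp add: pseq_def)
lemma pre_post: "pre_D_seq C X Y F \<Longrightarrow> arr k \<Longrightarrow> dm k = Y \<Longrightarrow> cd k = Y' \<Longrightarrow> pre_D_seq C X Y' (post F k)"
  by (rule preI) (simp add: post_def)
lemma pre_Dk: "pre_D_seq C X Y F \<Longrightarrow> pre_D_seq C (Pnob C k X) Y (Dk k F)"
  by (rule preI) (simp add: Dk_def)
lemma pre_add: "pre_D_seq C X Y F \<Longrightarrow> pre_D_seq C X Y G \<Longrightarrow> pre_D_seq C X Y (seq_add C F G)"
  by (rule preI) (simp add: seq_add_def)
lemma pre_zero: "X \<in> Ob C \<Longrightarrow> Y \<in> Ob C \<Longrightarrow> pre_D_seq C X Y (seq_zero C X Y)"
  by (rule preI) (simp add: seq_zero_def)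
lemma pre_T: "pre_D_seq C X Y F \<Longrightarrow> pre_D_seq C (prd C X X) (prd C Y Y) (Tseq C X F)"
  apply (rule preI)
  apply (frule pre_ob1, frule pre_ob2)
  apply (simp add: Tseq_def)
  done
lemma pre_Titer: "pre_D_seq C X Y F \<Longrightarrow> pre_D_seq C (Pnob C m X) (Pnob C m Y) (Titer C m X F)"
proof (induction m)
  case 0 then show ?case by simp
next
  case (Suc m)
  then show ?case using pre_T[OF Suc.IH[OF Suc.prems]] by simp
qed
lemma pre_comp: "pre_D_seq C X Y G \<Longrightarrow> pre_D_seq C Y E K \<Longrightarrow> pre_D_seq C X E (seq_comp C X G K)"
proof (rule preI)
  fix m assume a: "pre_D_seq C X Y G" "pre_D_seq C Y E K"
  have t: "pre_D_seq C (Pnob C m X) (Pnob C m Y) (Titer C m X G)" using pre_Titer a by blast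
  show "arr (seq_comp C X G K m) \<and> dm (seq_comp C X G K m) = Pnob C m X \<and> cd (seq_comp C X G K m) = E"
    using preD_arr[OF t, of 0] preD_dm[OF t, of 0] preD_cd[OF t, of 0] a
    by (simp add: seq_comp_def)
qed

lemma act_act: "pre_D_seq C X Y F \<Longrightarrow> arr h \<Longrightarrow> dm h = X' \<Longrightarrow> cd h = X \<Longrightarrow> arr h' \<Longrightarrow> cd h' = X' \<Longrightarrow> dm h' = X'' \<Longrightarrow>
  act C X'' h' (act C X' h F) = act C X'' (cmp C h' h) F"
  by (rule ext) (simp add: act_def)
lemma act_ide: "pre_D_seq C X Y F \<Longrightarrow> act C X (ide C X) F = F"
  by (rule ext) (simp add: act_def pre_ob1)
lemma act_zero: "arr h \<Longrightarrow> dm h = X' \<Longrightarrow> cd h = X \<Longrightarrow> Y \<in> Ob C \<Longrightarrow> act C X' h (seq_zero C X Y) = seq_zero C X' Y"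
  by (rule ext) (simp add: act_def seq_zero_def)
lemma act_add: "pre_D_seq C X Y F \<Longrightarrow> pre_D_seq C X Y G \<Longrightarrow> arr h \<Longrightarrow> dm h = X' \<Longrightarrow> cd h = X \<Longrightarrow>
  act C X' h (seq_add C F G) = seq_add C (act C X' h F) (act C X' h G)"
  by (rule ext) (simp add: act_def seq_add_def)
lemma act_pseq: "pre_D_seq C X Y F \<Longrightarrow> pre_D_seq C X Y' G \<Longrightarrow> arr h \<Longrightarrow> dm h = X' \<Longrightarrow> cd h = X \<Longrightarrow>
  act C X' h (pseq F G) = pseq (act C X' h F) (act C X' h G)"
  by (rule ext) (simp add: act_def pseq_def)
lemma act_post: "pre_D_seq C X Y F \<Longrightarrow> arr k \<Longrightarrow> dm k = Y \<Longrightarrow> arr h \<Longrightarrow> dm h = X' \<Longrightarrow> cd h = X \<Longrightarrow>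
  act C X' h (post F k) = post (act C X' h F) k"
  by (rule ext) (simp add: act_def post_def)
lemma Dk_act: "Dk k (act C X h F) = act C (Pnob C k X) (Pnmap C k X h) (Dk k F)"
  by (rule ext) (simp add: act_def Dk_def Pnmap_add)
lemma Dk_pseq: "Dk k (pseq F G) = pseq (Dk k F) (Dk k G)"
  by (rule ext) (simp add: pseq_def Dk_def)
lemma Dk_Dk: "Dk a (Dk b F) = Dk (b + a) F"
  by (rule ext) (simp add: Dk_def add.assoc)
lemma Dk_0[simp]: "Dk 0 F = F"
  by (rule ext) (simp add: Dk_def)

lemma Tseq_eq: "Tseq C X F = pseq (act C (prd C X X) (pr0 C X X) F) (Dk 1 F)"
  by (rule ext) (simp add: Tseq_def pseq_def act_def Dk_def)

lemma T_act: "pre_D_seq C X Y F \<Longrightarrow> arr h \<Longrightarrow> dm h = X' \<Longrightarrow> cd h = X \<Longrightarrow>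
  Tseq C X' (act C X' h F) = act C (prd C X' X') (Pmap C X' h) (Tseq C X F)"
  apply (rule ext)
  apply (frule pre_ob1, frule pre_ob2)
  apply (subgoal_tac "X' \<in> Ob C")
   prefer 2 apply (metis ob_dm)
  apply (simp add: Tseq_def act_def Pnmap_Suc' del: Pnmap.simps)
  done

lemma T_post: "pre_D_seq C X Y F \<Longrightarrow> arr k \<Longrightarrow> dm k = Y \<Longrightarrow>
  Tseq C X (post F k) = post (Tseq C X F) (Pmap C Y k)"
  apply (rule ext)
  apply (frule pre_ob1, frule pre_ob2)
  apply (simp add: Tseq_def post_def Pmap_def)
  done


lemma Titer_act: assumes F: "pre_D_seq C X Y F" and h: "arr h" "dm h = X'" "cd h = X"
  shows "Titer C m X' (act C X' h F) = act C (Pnob C m X') (Pnmap C m X' h) (Titer C m X F)"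
proof (induction m)
  case 0 then show ?case by simp
next
  case (Suc m)
  have t: "pre_D_seq C (Pnob C m X) (Pnob C m Y) (Titer C m X F)" using pre_Titer F by blast
  have "Titer C (Suc m) X' (act C X' h F) = Tseq C (Pnob C m X') (act C (Pnob C m X') (Pnmap C m X' h) (Titer C m X F))"
    using Suc by simp
  also have "... = act C (prd C (Pnob C m X') (Pnob C m X')) (Pmap C (Pnob C m X') (Pnmap C m X' h)) (Tseq C (Pnob C m X) (Titer C m X F))"
    by (rule T_act[OF t]) (use h in simp_all)
  finally show ?case by simp
qed

lemma Titer_post: assumes F: "pre_D_seq C X Y F" and k: "arr k" "dm k = Y"
  shows "Titer C m X (post F k) = post (Titer C m X F) (Pnmap C m Y k)"
proof (induction m)
  case 0 then show ?case by simp
next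
  case (Suc m)
  have t: "pre_D_seq C (Pnob C m X) (Pnob C m Y) (Titer C m X F)" using pre_Titer F by blast
  have "Titer C (Suc m) X (post F k) = Tseq C (Pnob C m X) (post (Titer C m X F) (Pnmap C m Y k))"
    using Suc by simp
  also have "... = post (Tseq C (Pnob C m X) (Titer C m X F)) (Pmap C (Pnob C m Y) (Pnmap C m Y k))"
    by (rule T_post[OF t]) (use k in simp_all)
  finally show ?case by simp
qed

lemma comp_act: assumes G: "pre_D_seq C X Y G" and K: "pre_D_seq C Y E K" and h: "arr h" "dm h = X'" "cd h = X"
  shows "seq_comp C X' (act C X' h G) K = act C X' h (seq_comp C X G K)"
proof (rule ext)
  fix m
  have t: "pre_D_seq C (Pnob C m X) (Pnob C m Y) (Titer C m X G)" using pre_Titer G by blast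
  show "seq_comp C X' (act C X' h G) K m = act C X' h (seq_comp C X G K) m"
    unfolding seq_comp_def Titer_act[OF G h] unfolding act_def
    using preD_arr[OF t, of 0] preD_dm[OF t, of 0] preD_cd[OF t, of 0] h K
    by simp
qed


lemma comp_post: assumes G: "pre_D_seq C X Y G" and K: "pre_D_seq C Y' E K" and k: "arr k" "dm k = Y" "cd k = Y'"
  shows "seq_comp C X (post G k) K = seq_comp C X G (act C Y k K)"
proof (rule ext)
  fix m
  have t: "pre_D_seq C (Pnob C m X) (Pnob C m Y) (Titer C m X G)" using pre_Titer G by blast
  show "seq_comp C X (post G k) K m = seq_comp C X G (act C Y k K) m"
    unfolding seq_comp_def Titer_post[OF G k(1,2)] unfolding act_def post_def
    using preD_arr[OF t, of 0] preD_dm[OF t, of 0] preD_cd[OF t, of 0] k K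
    by simp
qed

lemma comp_add: assumes G: "pre_D_seq C X Y G" and K: "pre_D_seq C Y E K" and K': "pre_D_seq C Y E K'"
  shows "seq_comp C X G (seq_add C K K') = seq_add C (seq_comp C X G K) (seq_comp C X G K')"
proof (rule ext)
  fix m
  have t: "pre_D_seq C (Pnob C m X) (Pnob C m Y) (Titer C m X G)" using pre_Titer G by blast
  show "seq_comp C X G (seq_add C K K') m = seq_add C (seq_comp C X G K) (seq_comp C X G K') m"
    unfolding seq_comp_def seq_add_def
    using preD_arr[OF t, of 0] preD_dm[OF t, of 0] preD_cd[OF t, of 0] K K'
    by simp
qed

lemma comp_zero: assumes G: "pre_D_seq C X Y G" and E: "E \<in> Ob C"
  shows "seq_comp C X G (seq_zero C Y E) = seq_zero C X E"
proof (rule ext)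
  fix m
  have t: "pre_D_seq C (Pnob C m X) (Pnob C m Y) (Titer C m X G)" using pre_Titer G by blast
  show "seq_comp C X G (seq_zero C Y E) m = seq_zero C X E m"
    unfolding seq_comp_def seq_zero_def
    using preD_arr[OF t, of 0] preD_dm[OF t, of 0] preD_cd[OF t, of 0] E
    by simp
qed

lemma Titer_add: "Titer C m (Pnob C k X) (Titer C k X F) = Titer C (k + m) X F"
  by (induction m) auto

lemma Dk_comp: "Dk k (seq_comp C X G K) = seq_comp C (Pnob C k X) (Titer C k X G) (Dk k K)"
  by (rule ext) (simp add: Dk_def seq_comp_def Titer_add)


lemma Titer_1[simp]: "Titer C 1 X G = Tseq C X G" by (simp add: One_nat_def)
lemma Titer_2[simp]: "Titer C 2 X G = Tseq C (prd C X X) (Tseq C X G)" by (simp add: numeral_2_eq_2)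

definition i0m where "i0m X = pair C (ide C X) (zro C X X)"
definition i1m where "i1m X = pair C (zro C X X) (ide C X)"
definition sm where "sm X \<phi> = id_times C X (prd C X X) \<phi>"
definition lm where "lm X = pair C (cmp C (pr0 C X X) (i0m X)) (cmp C (pr1 C X X) (i1m X))"
definition cm where "cm X = pair C (pair C (cmp C (pr0 C (prd C X X) (prd C X X)) (pr0 C X X)) (cmp C (pr1 C (prd C X X) (prd C X X)) (pr0 C X X)))
                        (pair C (cmp C (pr0 C (prd C X X) (prd C X X)) (pr1 C X X)) (cmp C (pr1 C (prd C X X) (prd C X X)) (pr1 C X X)))"

lemma arr_i0m[simp]: "X \<in> Ob C \<Longrightarrow> arr (i0m X)" "X \<in> Ob C \<Longrightarrow> dm (i0m X) = X" "X \<in> Ob C \<Longrightarrow> cd (i0m X) = prd C X X"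
  by (simp_all add: i0m_def)
lemma arr_i1m[simp]: "X \<in> Ob C \<Longrightarrow> arr (i1m X)" "X \<in> Ob C \<Longrightarrow> dm (i1m X) = X" "X \<in> Ob C \<Longrightarrow> cd (i1m X) = prd C X X"
  by (simp_all add: i1m_def)
lemma arr_sm[simp]: "X \<in> Ob C \<Longrightarrow> arr \<phi> \<Longrightarrow> dm \<phi> = prd C X X \<Longrightarrow> cd \<phi> = X \<Longrightarrow> arr (sm X \<phi>)"
  "X \<in> Ob C \<Longrightarrow> arr \<phi> \<Longrightarrow> dm \<phi> = prd C X X \<Longrightarrow> cd \<phi> = X \<Longrightarrow> dm (sm X \<phi>) = prd C X (prd C X X)"
  "X \<in> Ob C \<Longrightarrow> arr \<phi> \<Longrightarrow> dm \<phi> = prd C X X \<Longrightarrow> cd \<phi> = X \<Longrightarrow> cd (sm X \<phi>) = prd C X X"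
  by (simp_all add: sm_def id_times_def)
lemma arr_lm[simp]: "X \<in> Ob C \<Longrightarrow> arr (lm X)" "X \<in> Ob C \<Longrightarrow> dm (lm X) = prd C X X"
  "X \<in> Ob C \<Longrightarrow> cd (lm X) = prd C (prd C X X) (prd C X X)"
  by (simp_all add: lm_def)
lemma arr_cm[simp]: "X \<in> Ob C \<Longrightarrow> arr (cm X)" "X \<in> Ob C \<Longrightarrow> dm (cm X) = prd C (prd C X X) (prd C X X)"
  "X \<in> Ob C \<Longrightarrow> cd (cm X) = prd C (prd C X X) (prd C X X)"
  by (simp_all add: cm_def)

definition Dc where "Dc X B F \<longleftrightarrow>
    act C X (i0m X) (Dk 1 F) = seq_zero C X B
  \<and> act C (prd C X (prd C X X)) (sm X (pls C (pr0 C X X) (pr1 C X X))) (Dk 1 F)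
     = seq_add C (act C (prd C X (prd C X X)) (sm X (pr0 C X X)) (Dk 1 F))
                 (act C (prd C X (prd C X X)) (sm X (pr1 C X X)) (Dk 1 F))
  \<and> act C (prd C X X) (lm X) (Dk 2 F) = Dk 1 F
  \<and> act C (prd C (prd C X X) (prd C X X)) (cm X) (Dk 2 F) = Dk 2 F"

lemma D_seq_iff: "D_seq C A B f \<longleftrightarrow> pre_D_seq C A B f \<and> (\<forall>n. Dc (Pnob C n A) B (Dk n f))"
  unfolding D_seq_def Dc_def Let_def Dk_Dk i0m_def i1m_def sm_def lm_def cm_def
  by simp


lemma pre_D1: "pre_D_seq C X Y G \<Longrightarrow> pre_D_seq C (prd C X X) Y (Dk 1 G)"
  using pre_Dk[of X Y G 1] by simp
lemma pre_D2: "pre_D_seq C X Y G \<Longrightarrow> pre_D_seq C (prd C (prd C X X) (prd C X X)) Y (Dk 2 G)"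
  using pre_Dk[of X Y G 2] by simp
lemma pre_D3: "pre_D_seq C X Y G \<Longrightarrow> pre_D_seq C (Pnob C 3 X) Y (Dk 3 G)"
  using pre_Dk[of X Y G 3] by simp

lemma E1: assumes G: "pre_D_seq C X Y G" and DG1: "act C X (i0m X) (Dk 1 G) = seq_zero C X Y"
  shows "act C X (i0m X) (Tseq C X G) = post G (i0m Y)"
proof -
  have X: "X \<in> Ob C" and Y: "Y \<in> Ob C" using pre_ob1 pre_ob2 G by blast+
  have G1: "pre_D_seq C (prd C X X) Y (Dk 1 G)" using pre_D1[OF G] .
  have G0: "pre_D_seq C (prd C X X) Y (act C (prd C X X) (pr0 C X X) G)"
    by (rule pre_act[OF G]) (simp_all add: X)
  have "act C X (i0m X) (Tseq C X G) = act C X (i0m X) (pseq (act C (prd C X X) (pr0 C X X) G) (Dk 1 G))"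
    by (simp add: Tseq_eq)
  also have "... = pseq (act C X (i0m X) (act C (prd C X X) (pr0 C X X) G)) (act C X (i0m X) (Dk 1 G))"
    by (rule act_pseq[OF G0 G1]) (simp_all add: X)
  also have "... = pseq (act C X (cmp C (i0m X) (pr0 C X X)) G) (seq_zero C X Y)"
    using DG1 by (subst act_act[OF G]) (simp_all add: X)
  also have "... = pseq G (seq_zero C X Y)"
    using act_ide[OF G] by (simp add: X i0m_def)
  also have "... = post G (i0m Y)"
    using G by (intro ext) (simp add: pseq_def post_def seq_zero_def i0m_def X Y)
  finally show ?thesis .
qed

lemma C_D1: assumes G: "pre_D_seq C X Y G" and K: "pre_D_seq C Y E K"
  and DG1: "act C X (i0m X) (Dk 1 G) = seq_zero C X Y"
  and DK1: "act C Y (i0m Y) (Dk 1 K) = seq_zero C Y E"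
  shows "act C X (i0m X) (Dk 1 (seq_comp C X G K)) = seq_zero C X E"
proof -
  have X: "X \<in> Ob C" and Y: "Y \<in> Ob C" and E: "E \<in> Ob C" using pre_ob1 pre_ob2 G K by blast+
  have K1: "pre_D_seq C (prd C Y Y) E (Dk 1 K)" using pre_D1[OF K] .
  have TG: "pre_D_seq C (prd C X X) (prd C Y Y) (Tseq C X G)" using pre_T[OF G] .
  have "act C X (i0m X) (Dk 1 (seq_comp C X G K)) = act C X (i0m X) (seq_comp C (prd C X X) (Tseq C X G) (Dk 1 K))"
    by (simp add: Dk_comp)
  also have "... = seq_comp C X (act C X (i0m X) (Tseq C X G)) (Dk 1 K)"
    by (rule comp_act[OF TG K1, symmetric]) (simp_all add: X)
  also have "... = seq_comp C X (post G (i0m Y)) (Dk 1 K)" using E1[OF G DG1] by simp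
  also have "... = seq_comp C X G (act C Y (i0m Y) (Dk 1 K))"
    by (rule comp_post[OF G K1]) (simp_all add: Y)
  also have "... = seq_zero C X E" using DK1 comp_zero[OF G E] by simp
  finally show ?thesis .
qed


lemma E2: assumes G: "pre_D_seq C X Y G" and phi: "arr \<phi>" "dm \<phi> = prd C X X" "cd \<phi> = X"
  shows "act C (prd C X (prd C X X)) (sm X \<phi>) (Tseq C X G)
       = pseq (act C (prd C X (prd C X X)) (pr0 C X (prd C X X)) G) (act C (prd C X (prd C X X)) (sm X \<phi>) (Dk 1 G))"
proof -
  have X: "X \<in> Ob C" and Y: "Y \<in> Ob C" using pre_ob1 pre_ob2 G by blast+
  have G1: "pre_D_seq C (prd C X X) Y (Dk 1 G)" using pre_D1[OF G] .
  have G0: "pre_D_seq C (prd C X X) Y (act C (prd C X X) (pr0 C X X) G)"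
    by (rule pre_act[OF G]) (simp_all add: X)
  have "act C (prd C X (prd C X X)) (sm X \<phi>) (Tseq C X G) = act C (prd C X (prd C X X)) (sm X \<phi>) (pseq (act C (prd C X X) (pr0 C X X) G) (Dk 1 G))"
    by (simp add: Tseq_eq)
  also have "... = pseq (act C (prd C X (prd C X X)) (sm X \<phi>) (act C (prd C X X) (pr0 C X X) G)) (act C (prd C X (prd C X X)) (sm X \<phi>) (Dk 1 G))"
    by (rule act_pseq[OF G0 G1]) (simp_all add: X phi)
  also have "act C (prd C X (prd C X X)) (sm X \<phi>) (act C (prd C X X) (pr0 C X X) G) = act C (prd C X (prd C X X)) (cmp C (sm X \<phi>) (pr0 C X X)) G"
    by (rule act_act[OF G]) (simp_all add: X phi)
  also have "cmp C (sm X \<phi>) (pr0 C X X) = pr0 C X (prd C X X)"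
    by (simp add: sm_def id_times_def X phi)
  finally show ?thesis .
qed

lemma C_D2: assumes G: "pre_D_seq C X Y G" and K: "pre_D_seq C Y E K"
  and DG2: "act C (prd C X (prd C X X)) (sm X (pls C (pr0 C X X) (pr1 C X X))) (Dk 1 G)
     = seq_add C (act C (prd C X (prd C X X)) (sm X (pr0 C X X)) (Dk 1 G))
                 (act C (prd C X (prd C X X)) (sm X (pr1 C X X)) (Dk 1 G))"
  and DK2: "act C (prd C Y (prd C Y Y)) (sm Y (pls C (pr0 C Y Y) (pr1 C Y Y))) (Dk 1 K)
     = seq_add C (act C (prd C Y (prd C Y Y)) (sm Y (pr0 C Y Y)) (Dk 1 K))
                 (act C (prd C Y (prd C Y Y)) (sm Y (pr1 C Y Y)) (Dk 1 K))"
  shows "act C (prd C X (prd C X X)) (sm X (pls C (pr0 C X X) (pr1 C X X))) (Dk 1 (seq_comp C X G K))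
     = seq_add C (act C (prd C X (prd C X X)) (sm X (pr0 C X X)) (Dk 1 (seq_comp C X G K)))
                 (act C (prd C X (prd C X X)) (sm X (pr1 C X X)) (Dk 1 (seq_comp C X G K)))"
proof -
  have X: "X \<in> Ob C" and Y: "Y \<in> Ob C" and E: "E \<in> Ob C" using pre_ob1 pre_ob2 G K by blast+
  define X3 where "X3 = prd C X (prd C X X)"
  define Y3 where "Y3 = prd C Y (prd C Y Y)"
  have X3: "X3 \<in> Ob C" "Y3 \<in> Ob C" using X Y by (simp_all add: X3_def Y3_def)
  have K1: "pre_D_seq C (prd C Y Y) E (Dk 1 K)" using pre_D1[OF K] .
  have G1: "pre_D_seq C (prd C X X) Y (Dk 1 G)" using pre_D1[OF G] .
  have TG: "pre_D_seq C (prd C X X) (prd C Y Y) (Tseq C X G)" using pre_T[OF G] .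
  define u where "u = act C X3 (pr0 C X (prd C X X)) G"
  define a where "a = act C X3 (sm X (pr0 C X X)) (Dk 1 G)"
  define b where "b = act C X3 (sm X (pr1 C X X)) (Dk 1 G)"
  have u: "pre_D_seq C X3 Y u" unfolding u_def by (rule pre_act[OF G]) (simp_all add: X X3_def)
  have a: "pre_D_seq C X3 Y a" unfolding a_def by (rule pre_act[OF G1]) (simp_all add: X X3_def)
  have b: "pre_D_seq C X3 Y b" unfolding b_def by (rule pre_act[OF G1]) (simp_all add: X X3_def)
  define V where "V = pseq u (pseq a b)"
  have V: "pre_D_seq C X3 Y3 V" unfolding V_def Y3_def by (intro pre_pseq u a b)
  note ua = preD_arr[OF u] preD_dm[OF u] preD_cd[OF u] preD_arr[OF a] preD_dm[OF a] preD_cd[OF a]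
     preD_arr[OF b] preD_dm[OF b] preD_cd[OF b]
  have pp: "arr (pls C (pr0 C X X) (pr1 C X X))" "dm (pls C (pr0 C X X) (pr1 C X X)) = prd C X X"
     "cd (pls C (pr0 C X X) (pr1 C X X)) = X" using X by simp_all
  have ppY: "arr (pls C (pr0 C Y Y) (pr1 C Y Y))" "dm (pls C (pr0 C Y Y) (pr1 C Y Y)) = prd C Y Y"
     "cd (pls C (pr0 C Y Y) (pr1 C Y Y)) = Y" using Y by simp_all
  have post_pp: "post V (sm Y (pls C (pr0 C Y Y) (pr1 C Y Y))) = pseq u (seq_add C a b)"
    by (rule ext) (simp add: V_def pseq_def post_def sm_def id_times_def seq_add_def ua Y)
  have post_0: "post V (sm Y (pr0 C Y Y)) = pseq u a"
    by (rule ext) (simp add: V_def pseq_def post_def sm_def id_times_def ua Y)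
  have post_1: "post V (sm Y (pr1 C Y Y)) = pseq u b"
    by (rule ext) (simp add: V_def pseq_def post_def sm_def id_times_def ua Y)
  have e0: "act C X3 (sm X (pr0 C X X)) (Tseq C X G) = pseq u a"
    unfolding u_def a_def X3_def by (rule E2[OF G]) (simp_all add: X)
  have e1: "act C X3 (sm X (pr1 C X X)) (Tseq C X G) = pseq u b"
    unfolding u_def b_def X3_def by (rule E2[OF G]) (simp_all add: X)
  have epp: "act C X3 (sm X (pls C (pr0 C X X) (pr1 C X X))) (Tseq C X G) = pseq u (seq_add C a b)"
    unfolding X3_def using E2[OF G pp] DG2 by (simp add: u_def a_def b_def X3_def)
  have s0K: "pre_D_seq C Y3 E (act C Y3 (sm Y (pr0 C Y Y)) (Dk 1 K))"
    by (rule pre_act[OF K1]) (simp_all add: Y Y3_def)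
  have s1K: "pre_D_seq C Y3 E (act C Y3 (sm Y (pr1 C Y Y)) (Dk 1 K))"
    by (rule pre_act[OF K1]) (simp_all add: Y Y3_def)
  have dF: "Dk 1 (seq_comp C X G K) = seq_comp C (prd C X X) (Tseq C X G) (Dk 1 K)"
    by (simp add: Dk_comp)
  have ca: "\<And>\<phi>. arr \<phi> \<Longrightarrow> dm \<phi> = prd C X X \<Longrightarrow> cd \<phi> = X \<Longrightarrow>
     act C X3 (sm X \<phi>) (seq_comp C (prd C X X) (Tseq C X G) (Dk 1 K)) = seq_comp C X3 (act C X3 (sm X \<phi>) (Tseq C X G)) (Dk 1 K)"
    by (rule comp_act[OF TG K1, symmetric]) (simp_all add: X X3_def)
  have cp: "\<And>\<phi>. arr \<phi> \<Longrightarrow> dm \<phi> = prd C Y Y \<Longrightarrow> cd \<phi> = Y \<Longrightarrow>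
     seq_comp C X3 (post V (sm Y \<phi>)) (Dk 1 K) = seq_comp C X3 V (act C Y3 (sm Y \<phi>) (Dk 1 K))"
    by (rule comp_post[OF V K1]) (simp_all add: Y Y3_def)
  have "act C X3 (sm X (pls C (pr0 C X X) (pr1 C X X))) (Dk 1 (seq_comp C X G K))
      = seq_comp C X3 (post V (sm Y (pls C (pr0 C Y Y) (pr1 C Y Y)))) (Dk 1 K)"
    unfolding dF ca[OF pp] epp post_pp ..
  also have "... = seq_comp C X3 V (act C Y3 (sm Y (pls C (pr0 C Y Y) (pr1 C Y Y))) (Dk 1 K))"
    using cp[OF ppY] .
  also have "... = seq_comp C X3 V (seq_add C (act C Y3 (sm Y (pr0 C Y Y)) (Dk 1 K)) (act C Y3 (sm Y (pr1 C Y Y)) (Dk 1 K)))"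
    using DK2 by (simp add: Y3_def)
  also have "... = seq_add C (seq_comp C X3 V (act C Y3 (sm Y (pr0 C Y Y)) (Dk 1 K))) (seq_comp C X3 V (act C Y3 (sm Y (pr1 C Y Y)) (Dk 1 K)))"
    by (rule comp_add[OF V s0K s1K])
  also have "... = seq_add C (seq_comp C X3 (post V (sm Y (pr0 C Y Y))) (Dk 1 K)) (seq_comp C X3 (post V (sm Y (pr1 C Y Y))) (Dk 1 K))"
    using cp[of "pr0 C Y Y"] cp[of "pr1 C Y Y"] Y by simp
  also have "... = seq_add C (act C X3 (sm X (pr0 C X X)) (Dk 1 (seq_comp C X G K))) (act C X3 (sm X (pr1 C X X)) (Dk 1 (seq_comp C X G K)))"
    unfolding dF using ca[of "pr0 C X X"] ca[of "pr1 C X X"] X e0 e1 post_0 post_1 by simp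
  finally show ?thesis unfolding X3_def .
qed


lemma TT_eq: assumes G: "pre_D_seq C X Y G"
  shows "Tseq C (prd C X X) (Tseq C X G) =
    pseq (pseq (act C (prd C (prd C X X) (prd C X X)) (cmp C (pr0 C (prd C X X) (prd C X X)) (pr0 C X X)) G)
               (act C (prd C (prd C X X) (prd C X X)) (pr0 C (prd C X X) (prd C X X)) (Dk 1 G)))
         (pseq (act C (prd C (prd C X X) (prd C X X)) (Pmap C (prd C X X) (pr0 C X X)) (Dk 1 G))
               (Dk 2 G))"
proof -
  have X: "X \<in> Ob C" and Y: "Y \<in> Ob C" using pre_ob1 pre_ob2 G by blast+
  show ?thesis
    by (rule ext) (simp add: Tseq_def pseq_def act_def Dk_def X Y preD_arr[OF G] preD_dm[OF G] preD_cd[OF G] Pnmap_Suc' numeral_2_eq_2 del: Pnmap.simps)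
qed

lemma E3: assumes G: "pre_D_seq C X Y G" and DG1: "act C X (i0m X) (Dk 1 G) = seq_zero C X Y"
  and DG3: "act C (prd C X X) (lm X) (Dk 2 G) = Dk 1 G"
  shows "act C (prd C X X) (lm X) (Tseq C (prd C X X) (Tseq C X G)) = post (Tseq C X G) (lm Y)"
proof -
  have X: "X \<in> Ob C" and Y: "Y \<in> Ob C" using pre_ob1 pre_ob2 G by blast+
  define X2 where "X2 = prd C X X"
  define X4 where "X4 = prd C X2 X2"
  have X2: "X2 \<in> Ob C" "X4 \<in> Ob C" using X by (simp_all add: X2_def X4_def)
  have G1: "pre_D_seq C X2 Y (Dk 1 G)" using pre_D1[OF G] X2_def by simp
  have G2: "pre_D_seq C X4 Y (Dk 2 G)" using pre_D2[OF G] X2_def X4_def by simp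
  define H where "H = Tseq C X G"
  have H: "pre_D_seq C X2 (prd C Y Y) H" unfolding H_def X2_def by (rule pre_T[OF G])
  define G0 where "G0 = act C X2 (pr0 C X X) G"
  have G0: "pre_D_seq C X2 Y G0" unfolding G0_def by (rule pre_act[OF G]) (simp_all add: X X2_def)
  have Heq: "H = pseq G0 (Dk 1 G)" by (simp add: H_def G0_def Tseq_eq X2_def)
  have H1: "pre_D_seq C X4 (prd C Y Y) (Dk 1 H)" using pre_D1[OF H] X4_def by simp
  have H0: "pre_D_seq C X4 (prd C Y Y) (act C X4 (pr0 C X2 X2) H)"
    by (rule pre_act[OF H]) (simp_all add: X2 X4_def)
  have DH: "Dk 1 H = pseq (act C X4 (Pmap C X2 (pr0 C X X)) (Dk 1 G)) (Dk 2 G)"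
    by (simp add: Heq Dk_pseq G0_def Dk_act Dk_Dk X4_def numeral_2_eq_2)
  have DG1': "pre_D_seq C X4 Y (act C X4 (Pmap C X2 (pr0 C X X)) (Dk 1 G))"
    by (rule pre_act[OF G1]) (simp_all add: X X2_def X4_def)
  have m1: "cmp C (lm X) (pr0 C X2 X2) = cmp C (pr0 C X X) (i0m X)"
    by (simp add: lm_def i0m_def i1m_def X X2_def)
  have m2: "cmp C (lm X) (Pmap C X2 (pr0 C X X)) = cmp C (pr0 C X X) (i0m X)"
    by (simp add: lm_def i0m_def i1m_def Pmap_def X X2_def)
  have first: "act C X2 (lm X) (act C X4 (pr0 C X2 X2) H) = post G0 (i0m Y)"
  proof -
    have "act C X2 (lm X) (act C X4 (pr0 C X2 X2) H) = act C X2 (cmp C (lm X) (pr0 C X2 X2)) H"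
      by (rule act_act[OF H]) (simp_all add: X X2_def X4_def)
    also have "... = act C X2 (cmp C (pr0 C X X) (i0m X)) H" using m1 by simp
    also have "... = act C X2 (pr0 C X X) (act C X (i0m X) H)"
      by (rule act_act[OF H, symmetric]) (simp_all add: X X2_def)
    also have "... = act C X2 (pr0 C X X) (post G (i0m Y))" using E1[OF G DG1] H_def by simp
    also have "... = post G0 (i0m Y)" unfolding G0_def
      by (rule act_post[OF G]) (simp_all add: X Y X2_def)
    finally show ?thesis .
  qed
  have second: "act C X2 (lm X) (Dk 1 H) = pseq (seq_zero C X2 Y) (Dk 1 G)"
  proof -
    have "act C X2 (lm X) (Dk 1 H) = pseq (act C X2 (lm X) (act C X4 (Pmap C X2 (pr0 C X X)) (Dk 1 G))) (act C X2 (lm X) (Dk 2 G))"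
      unfolding DH by (rule act_pseq[OF DG1' G2]) (simp_all add: X X2_def X4_def)
    also have "act C X2 (lm X) (act C X4 (Pmap C X2 (pr0 C X X)) (Dk 1 G)) = act C X2 (cmp C (lm X) (Pmap C X2 (pr0 C X X))) (Dk 1 G)"
      by (rule act_act[OF G1]) (simp_all add: X X2_def X4_def)
    also have "... = act C X2 (pr0 C X X) (act C X (i0m X) (Dk 1 G))"
      unfolding m2 by (rule act_act[OF G1, symmetric]) (simp_all add: X X2_def)
    also have "... = seq_zero C X2 Y" using DG1 by (simp add: act_zero X Y X2_def)
    finally show ?thesis using DG3 X2_def by simp
  qed
  have "act C X2 (lm X) (Tseq C X2 H) = pseq (post G0 (i0m Y)) (pseq (seq_zero C X2 Y) (Dk 1 G))"
    unfolding Tseq_eq[of X2 H] X4_def[symmetric] first[symmetric] second[symmetric]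
    by (rule act_pseq[OF H0 H1]) (simp_all add: X X2_def X4_def)
  also have "... = post H (lm Y)"
    unfolding Heq by (rule ext) (simp add: pseq_def post_def seq_zero_def lm_def i0m_def i1m_def X Y X2_def
         preD_arr[OF G0] preD_dm[OF G0] preD_cd[OF G0] preD_arr[OF G] preD_dm[OF G] preD_cd[OF G] Dk_def)
  finally show ?thesis unfolding H_def X2_def .
qed


lemma pre_TT: "pre_D_seq C X Y G \<Longrightarrow> pre_D_seq C (prd C (prd C X X) (prd C X X)) (prd C (prd C Y Y) (prd C Y Y)) (Tseq C (prd C X X) (Tseq C X G))"
  by (intro pre_T)

lemma C_D3: assumes G: "pre_D_seq C X Y G" and K: "pre_D_seq C Y E K"
  and DG1: "act C X (i0m X) (Dk 1 G) = seq_zero C X Y"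
  and DG3: "act C (prd C X X) (lm X) (Dk 2 G) = Dk 1 G"
  and DK3: "act C (prd C Y Y) (lm Y) (Dk 2 K) = Dk 1 K"
  shows "act C (prd C X X) (lm X) (Dk 2 (seq_comp C X G K)) = Dk 1 (seq_comp C X G K)"
proof -
  have X: "X \<in> Ob C" and Y: "Y \<in> Ob C" and E: "E \<in> Ob C" using pre_ob1 pre_ob2 G K by blast+
  have K2: "pre_D_seq C (prd C (prd C Y Y) (prd C Y Y)) E (Dk 2 K)" using pre_D2[OF K] .
  have TG: "pre_D_seq C (prd C X X) (prd C Y Y) (Tseq C X G)" using pre_T[OF G] .
  have TTG: "pre_D_seq C (prd C (prd C X X) (prd C X X)) (prd C (prd C Y Y) (prd C Y Y)) (Tseq C (prd C X X) (Tseq C X G))"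
    using pre_TT[OF G] .
  have "act C (prd C X X) (lm X) (Dk 2 (seq_comp C X G K))
      = act C (prd C X X) (lm X) (seq_comp C (prd C (prd C X X) (prd C X X)) (Tseq C (prd C X X) (Tseq C X G)) (Dk 2 K))"
    by (simp add: Dk_comp)
  also have "... = seq_comp C (prd C X X) (act C (prd C X X) (lm X) (Tseq C (prd C X X) (Tseq C X G))) (Dk 2 K)"
    by (rule comp_act[OF TTG K2, symmetric]) (simp_all add: X)
  also have "... = seq_comp C (prd C X X) (post (Tseq C X G) (lm Y)) (Dk 2 K)"
    using E3[OF G DG1 DG3] by simp
  also have "... = seq_comp C (prd C X X) (Tseq C X G) (act C (prd C Y Y) (lm Y) (Dk 2 K))"
    by (rule comp_post[OF TG K2]) (simp_all add: Y)
  also have "... = Dk 1 (seq_comp C X G K)" using DK3 by (simp add: Dk_comp)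
  finally show ?thesis .
qed

lemma E4: assumes G: "pre_D_seq C X Y G"
  and DG4: "act C (prd C (prd C X X) (prd C X X)) (cm X) (Dk 2 G) = Dk 2 G"
  shows "act C (prd C (prd C X X) (prd C X X)) (cm X) (Tseq C (prd C X X) (Tseq C X G)) = post (Tseq C (prd C X X) (Tseq C X G)) (cm Y)"
proof -
  have X: "X \<in> Ob C" and Y: "Y \<in> Ob C" using pre_ob1 pre_ob2 G by blast+
  define X2 where "X2 = prd C X X"
  define X4 where "X4 = prd C X2 X2"
  have X2: "X2 \<in> Ob C" "X4 \<in> Ob C" using X by (simp_all add: X2_def X4_def)
  have G1: "pre_D_seq C X2 Y (Dk 1 G)" using pre_D1[OF G] X2_def by simp
  have G2: "pre_D_seq C X4 Y (Dk 2 G)" using pre_D2[OF G] X2_def X4_def by simp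
  define A where "A = act C X4 (cmp C (pr0 C X2 X2) (pr0 C X X)) G"
  define B where "B = act C X4 (pr0 C X2 X2) (Dk 1 G)"
  define D where "D = act C X4 (Pmap C X2 (pr0 C X X)) (Dk 1 G)"
  have A: "pre_D_seq C X4 Y A" unfolding A_def by (rule pre_act[OF G]) (simp_all add: X X2_def X4_def)
  have B: "pre_D_seq C X4 Y B" unfolding B_def by (rule pre_act[OF G1]) (simp_all add: X X2_def X4_def)
  have D: "pre_D_seq C X4 Y D" unfolding D_def by (rule pre_act[OF G1]) (simp_all add: X X2_def X4_def)
  have TT: "Tseq C X2 (Tseq C X G) = pseq (pseq A B) (pseq D (Dk 2 G))"
    unfolding A_def B_def D_def X4_def X2_def by (rule TT_eq[OF G])
  have c1: "cmp C (cm X) (cmp C (pr0 C X2 X2) (pr0 C X X)) = cmp C (pr0 C X2 X2) (pr0 C X X)"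
    by (simp add: cm_def X X2_def)
  have c2: "cmp C (cm X) (pr0 C X2 X2) = Pmap C X2 (pr0 C X X)"
    by (simp add: cm_def Pmap_def X X2_def)
  have c3: "cmp C (cm X) (Pmap C X2 (pr0 C X X)) = pr0 C X2 X2"
    by (simp add: cm_def Pmap_def X X2_def)
  have AB: "pre_D_seq C X4 (prd C Y Y) (pseq A B)" by (rule pre_pseq[OF A B])
  have DD: "pre_D_seq C X4 (prd C Y Y) (pseq D (Dk 2 G))" by (rule pre_pseq[OF D G2])
  have "act C X4 (cm X) (Tseq C X2 (Tseq C X G)) = pseq (act C X4 (cm X) (pseq A B)) (act C X4 (cm X) (pseq D (Dk 2 G)))"
    unfolding TT by (rule act_pseq[OF AB DD]) (simp_all add: X X2_def X4_def)
  also have "act C X4 (cm X) (pseq A B) = pseq (act C X4 (cm X) A) (act C X4 (cm X) B)"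
    by (rule act_pseq[OF A B]) (simp_all add: X X2_def X4_def)
  also have "act C X4 (cm X) (pseq D (Dk 2 G)) = pseq (act C X4 (cm X) D) (act C X4 (cm X) (Dk 2 G))"
    by (rule act_pseq[OF D G2]) (simp_all add: X X2_def X4_def)
  also have "act C X4 (cm X) A = A"
    unfolding A_def by (subst act_act[OF G]) (simp_all add: X X2_def X4_def c1[unfolded X2_def])
  also have "act C X4 (cm X) B = D"
    unfolding B_def D_def by (subst act_act[OF G1]) (simp_all add: X X2_def X4_def c2[unfolded X2_def])
  also have "act C X4 (cm X) D = B"
    unfolding B_def D_def by (subst act_act[OF G1]) (simp_all add: X X2_def X4_def c3[unfolded X2_def])
  also have "act C X4 (cm X) (Dk 2 G) = Dk 2 G" using DG4 X2_def X4_def by simp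
  also have "pseq (pseq A D) (pseq B (Dk 2 G)) = post (pseq (pseq A B) (pseq D (Dk 2 G))) (cm Y)"
    by (rule ext) (simp add: pseq_def post_def cm_def Y preD_arr[OF A] preD_dm[OF A] preD_cd[OF A]
         preD_arr[OF B] preD_dm[OF B] preD_cd[OF B] preD_arr[OF D] preD_dm[OF D] preD_cd[OF D]
         preD_arr[OF G2] preD_dm[OF G2] preD_cd[OF G2])
  finally show ?thesis unfolding TT[symmetric] X4_def X2_def .
qed

lemma C_D4: assumes G: "pre_D_seq C X Y G" and K: "pre_D_seq C Y E K"
  and DG4: "act C (prd C (prd C X X) (prd C X X)) (cm X) (Dk 2 G) = Dk 2 G"
  and DK4: "act C (prd C (prd C Y Y) (prd C Y Y)) (cm Y) (Dk 2 K) = Dk 2 K"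
  shows "act C (prd C (prd C X X) (prd C X X)) (cm X) (Dk 2 (seq_comp C X G K)) = Dk 2 (seq_comp C X G K)"
proof -
  have X: "X \<in> Ob C" and Y: "Y \<in> Ob C" and E: "E \<in> Ob C" using pre_ob1 pre_ob2 G K by blast+
  have K2: "pre_D_seq C (prd C (prd C Y Y) (prd C Y Y)) E (Dk 2 K)" using pre_D2[OF K] .
  have TTG: "pre_D_seq C (prd C (prd C X X) (prd C X X)) (prd C (prd C Y Y) (prd C Y Y)) (Tseq C (prd C X X) (Tseq C X G))"
    using pre_TT[OF G] .
  have "act C (prd C (prd C X X) (prd C X X)) (cm X) (Dk 2 (seq_comp C X G K))
      = act C (prd C (prd C X X) (prd C X X)) (cm X) (seq_comp C (prd C (prd C X X) (prd C X X)) (Tseq C (prd C X X) (Tseq C X G)) (Dk 2 K))"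
    by (simp add: Dk_comp)
  also have "... = seq_comp C (prd C (prd C X X) (prd C X X)) (act C (prd C (prd C X X) (prd C X X)) (cm X) (Tseq C (prd C X X) (Tseq C X G))) (Dk 2 K)"
    by (rule comp_act[OF TTG K2, symmetric]) (simp_all add: X)
  also have "... = seq_comp C (prd C (prd C X X) (prd C X X)) (post (Tseq C (prd C X X) (Tseq C X G)) (cm Y)) (Dk 2 K)"
    using E4[OF G DG4] by simp
  also have "... = seq_comp C (prd C (prd C X X) (prd C X X)) (Tseq C (prd C X X) (Tseq C X G)) (act C (prd C (prd C Y Y) (prd C Y Y)) (cm Y) (Dk 2 K))"
    by (rule comp_post[OF TTG K2]) (simp_all add: Y)
  also have "... = Dk 2 (seq_comp C X G K)" using DK4 by (simp add: Dk_comp)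
  finally show ?thesis .
qed

lemma lemC: assumes G: "pre_D_seq C X Y G" and K: "pre_D_seq C Y E K"
  and DG: "Dc X Y G" and DK: "Dc Y E K"
  shows "Dc X E (seq_comp C X G K)"
  using DG DK unfolding Dc_def
  using C_D1[OF G K] C_D2[OF G K] C_D3[OF G K] C_D4[OF G K] by blast


definition addv where "addv q \<longleftrightarrow> arr q \<and> (\<forall>Z. Z \<in> Ob C \<longrightarrow> cmp C (zro C Z (dm q)) q = zro C Z (cd q))
  \<and> (\<forall>a b. arr a \<longrightarrow> arr b \<longrightarrow> dm a = dm b \<longrightarrow> cd a = dm q \<longrightarrow> cd b = dm q \<longrightarrow>
        cmp C (pls C a b) q = pls C (cmp C a q) (cmp C b q))"

lemma addv_pr0: "A \<in> Ob C \<Longrightarrow> B \<in> Ob C \<Longrightarrow> addv (pr0 C A B)"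
  unfolding addv_def by simp

lemma addv_Pmap: assumes q: "addv q" shows "addv (Pmap C (dm q) q)"
proof -
  have a: "arr q" using q addv_def by blast
  have z: "\<And>Z. Z \<in> Ob C \<Longrightarrow> cmp C (zro C Z (dm q)) q = zro C Z (cd q)" using q addv_def by blast
  have p: "\<And>a b. arr a \<Longrightarrow> arr b \<Longrightarrow> dm a = dm b \<Longrightarrow> cd a = dm q \<Longrightarrow> cd b = dm q \<Longrightarrow>
        cmp C (pls C a b) q = pls C (cmp C a q) (cmp C b q)" using q addv_def by blast
  show ?thesis unfolding addv_def
  proof (intro conjI allI impI)
    show "arr (Pmap C (dm q) q)" using a by simp
  next
    fix Z assume Z: "Z \<in> Ob C"
    show "cmp C (zro C Z (dm (Pmap C (dm q) q))) (Pmap C (dm q) q) = zro C Z (cd (Pmap C (dm q) q))"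
      using a Z by (simp add: Pmap_def z)
  next
    fix x y assume xy: "arr x" "arr y" "dm x = dm y" "cd x = dm (Pmap C (dm q) q)" "cd y = dm (Pmap C (dm q) q)"
    have e: "cmp C (pls C x y) (cmp C (pr C (dm q) (dm q)) q) = pls C (cmp C x (cmp C (pr C (dm q) (dm q)) q)) (cmp C y (cmp C (pr C (dm q) (dm q)) q))"
      if pr: "pr = pr0 \<or> pr = pr1" for pr
    proof -
      have ar: "arr (pr C (dm q) (dm q))" "dm (pr C (dm q) (dm q)) = prd C (dm q) (dm q)" "cd (pr C (dm q) (dm q)) = dm q"
        using pr a by auto
      have "cmp C (pls C x y) (cmp C (pr C (dm q) (dm q)) q) = cmp C (cmp C (pls C x y) (pr C (dm q) (dm q))) q"
        by (rule assoc[symmetric]) (use a xy ar in simp_all)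
      also have "cmp C (pls C x y) (pr C (dm q) (dm q)) = pls C (cmp C x (pr C (dm q) (dm q))) (cmp C y (pr C (dm q) (dm q)))"
        using pr a xy by auto
      also have "cmp C (pls C (cmp C x (pr C (dm q) (dm q))) (cmp C y (pr C (dm q) (dm q)))) q
         = pls C (cmp C (cmp C x (pr C (dm q) (dm q))) q) (cmp C (cmp C y (pr C (dm q) (dm q))) q)"
        by (rule p) (use a xy ar in simp_all)
      also have "... = pls C (cmp C x (cmp C (pr C (dm q) (dm q)) q)) (cmp C y (cmp C (pr C (dm q) (dm q)) q))"
        using a xy ar by simp
      finally show ?thesis .
    qed
    have "cmp C (pls C x y) (Pmap C (dm q) q) =
      pair C (cmp C (pls C x y) (cmp C (pr0 C (dm q) (dm q)) q)) (cmp C (pls C x y) (cmp C (pr1 C (dm q) (dm q)) q))"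
      using a xy by (simp add: Pmap_def)
    also have "... = pls C (cmp C x (Pmap C (dm q) q)) (cmp C y (Pmap C (dm q) q))"
      unfolding e[of pr0, simplified] e[of pr1, simplified] using a xy by (simp add: Pmap_def)
    finally show "cmp C (pls C x y) (Pmap C (dm q) q) = pls C (cmp C x (Pmap C (dm q) q)) (cmp C y (Pmap C (dm q) q))" .
  qed
qed

lemma addv_Pnmap: assumes q: "addv q" shows "addv (Pnmap C n (dm q) q)"
proof (induction n)
  case 0 then show ?case using q by simp
next
  case (Suc n)
  have a: "arr q" using q addv_def by blast
  have "addv (Pmap C (dm (Pnmap C n (dm q) q)) (Pnmap C n (dm q) q))" using addv_Pmap[OF Suc] .
  then show ?case using a by simp
qed


lemma pseq_add: "pre_D_seq C X Y a \<Longrightarrow> pre_D_seq C X Y b \<Longrightarrow> pre_D_seq C X Y' c \<Longrightarrow> pre_D_seq C X Y' d \<Longrightarrow>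
  pseq (seq_add C a b) (seq_add C c d) = seq_add C (pseq a c) (pseq b d)"
  by (rule ext) (simp add: pseq_def seq_add_def)

lemma pseq_zero: "X \<in> Ob C \<Longrightarrow> Y \<in> Ob C \<Longrightarrow> Y' \<in> Ob C \<Longrightarrow> pseq (seq_zero C X Y) (seq_zero C X Y') = seq_zero C X (prd C Y Y')"
  by (rule ext) (simp add: pseq_def seq_zero_def)

lemma B0: assumes F: "pre_D_seq C X B F" and DF: "Dc X B F" and DF1: "Dc (prd C X X) B (Dk 1 F)"
  and q: "arr q" "dm q = prd C X X" "cd q = X"
  and qz: "\<And>Z. Z \<in> Ob C \<Longrightarrow> cmp C (zro C Z (prd C X X)) q = zro C Z X"
  and qa: "\<And>a b. arr a \<Longrightarrow> arr b \<Longrightarrow> dm a = dm b \<Longrightarrow> cd a = prd C X X \<Longrightarrow> cd b = prd C X X \<Longrightarrow>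
        cmp C (pls C a b) q = pls C (cmp C a q) (cmp C b q)"
  shows "Dc (prd C X X) (prd C B B) (pseq (act C (prd C X X) q F) (Dk 1 F))"
proof -
  have X: "X \<in> Ob C" and B: "B \<in> Ob C" using pre_ob1 pre_ob2 F by blast+
  define X' where "X' = prd C X X"
  define X2 where "X2 = prd C X' X'"
  define X4 where "X4 = prd C X2 X2"
  have Xs: "X' \<in> Ob C" "X2 \<in> Ob C" "X4 \<in> Ob C" using X by (simp_all add: X'_def X2_def X4_def)
  define Pq where "Pq = Pmap C X' q"
  define PPq where "PPq = Pmap C X2 Pq"
  have Pq: "arr Pq" "dm Pq = X2" "cd Pq = X'" using q by (simp_all add: Pq_def X'_def X2_def)
  have PPq: "arr PPq" "dm PPq = X4" "cd PPq = X2" using Pq by (simp_all add: PPq_def X2_def X4_def)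
  have F1: "pre_D_seq C X' B (Dk 1 F)" using pre_D1[OF F] X'_def by simp
  have F2: "pre_D_seq C X2 B (Dk 2 F)" using pre_D2[OF F] X'_def X2_def by simp
  have F3: "pre_D_seq C X4 B (Dk 3 F)" using pre_D3[OF F] X'_def X2_def X4_def by (simp add: numeral_3_eq_3)
  have qF: "pre_D_seq C X' B (act C X' q F)" by (rule pre_act[OF F]) (simp_all add: q X'_def)
  define S where "S = pseq (act C X' q F) (Dk 1 F)"
  have S1: "Dk 1 S = pseq (act C X2 Pq (Dk 1 F)) (Dk 2 F)"
    by (simp add: S_def Dk_pseq Dk_act Dk_Dk Pq_def X2_def numeral_2_eq_2)
  have S2: "Dk 2 S = pseq (act C X4 PPq (Dk 2 F)) (Dk 3 F)"
    by (simp add: S_def Dk_pseq Dk_act Dk_Dk Pq_def PPq_def X2_def X4_def Pnmap_2 numeral_2_eq_2 numeral_3_eq_3)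
  have PqF1: "pre_D_seq C X2 B (act C X2 Pq (Dk 1 F))" by (rule pre_act[OF F1]) (simp_all add: Pq)
  have PPqF2: "pre_D_seq C X4 B (act C X4 PPq (Dk 2 F))" by (rule pre_act[OF F2]) (simp_all add: PPq)
  have d11: "Dk 1 (Dk 1 F) = Dk 2 F" by (simp add: Dk_Dk numeral_2_eq_2)
  have d21: "Dk 2 (Dk 1 F) = Dk 3 F" by (simp add: Dk_Dk numeral_2_eq_2 numeral_3_eq_3)
  have DF_1: "act C X (i0m X) (Dk 1 F) = seq_zero C X B"
   and DF_2: "act C (prd C X X') (sm X (pls C (pr0 C X X) (pr1 C X X))) (Dk 1 F)
     = seq_add C (act C (prd C X X') (sm X (pr0 C X X)) (Dk 1 F))
                 (act C (prd C X X') (sm X (pr1 C X X)) (Dk 1 F))"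
   and DF_3: "act C X' (lm X) (Dk 2 F) = Dk 1 F"
   and DF_4: "act C X2 (cm X) (Dk 2 F) = Dk 2 F"
    using DF unfolding Dc_def X'_def X2_def by blast+
  have DF1_1: "act C X' (i0m X') (Dk 2 F) = seq_zero C X' B"
   and DF1_2: "act C (prd C X' X2) (sm X' (pls C (pr0 C X' X') (pr1 C X' X'))) (Dk 2 F)
     = seq_add C (act C (prd C X' X2) (sm X' (pr0 C X' X')) (Dk 2 F))
                 (act C (prd C X' X2) (sm X' (pr1 C X' X')) (Dk 2 F))"
   and DF1_3: "act C X2 (lm X') (Dk 3 F) = Dk 2 F"
   and DF1_4: "act C X4 (cm X') (Dk 3 F) = Dk 3 F"
    using DF1 unfolding Dc_def d11 d21 X'_def[symmetric] X2_def[symmetric] X4_def[symmetric] by blast+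
  have n1: "cmp C (i0m X') Pq = cmp C q (i0m X)"
    using q X by (simp add: i0m_def Pq_def Pmap_def X'_def qz)
  have d1: "act C X' (i0m X') (Dk 1 S) = seq_zero C X' (prd C B B)"
  proof -
    have "act C X' (i0m X') (Dk 1 S) = pseq (act C X' (i0m X') (act C X2 Pq (Dk 1 F))) (act C X' (i0m X') (Dk 2 F))"
      unfolding S1 by (rule act_pseq[OF PqF1 F2]) (simp_all add: Xs X2_def)
    also have "act C X' (i0m X') (act C X2 Pq (Dk 1 F)) = act C X' (cmp C q (i0m X)) (Dk 1 F)"
      unfolding n1[symmetric] by (rule act_act[OF F1]) (simp_all add: Pq Xs X2_def)
    also have "... = act C X' q (act C X (i0m X) (Dk 1 F))"
      by (rule act_act[OF F1, symmetric]) (simp_all add: q X X'_def)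
    also have "... = seq_zero C X' B" using DF_1 q B X by (simp add: act_zero X'_def)
    also note DF1_1
    finally show ?thesis using pseq_zero Xs B by simp
  qed
  define r where "r = pair C (cmp C (pr0 C X' X2) q) (cmp C (pr1 C X' X2) Pq)"
  have r: "arr r" "dm r = prd C X' X2" "cd r = prd C X X'"
    using q Pq Xs X by (simp_all add: r_def X'_def X2_def)
  have n2: "cmp C (sm X' \<phi>') Pq = cmp C r (sm X \<phi>)"
    if "(\<phi>' = pr0 C X' X' \<and> \<phi> = pr0 C X X) \<or> (\<phi>' = pr1 C X' X' \<and> \<phi> = pr1 C X X)
      \<or> (\<phi>' = pls C (pr0 C X' X') (pr1 C X' X') \<and> \<phi> = pls C (pr0 C X X) (pr1 C X X))" for \<phi>' \<phi>
    using that q X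
    by (auto simp: sm_def id_times_def r_def Pq_def Pmap_def X'_def X2_def qa)
  have gen: "act C (prd C X' X2) (sm X' \<phi>') (Dk 1 S)
     = pseq (act C (prd C X' X2) r (act C (prd C X X') (sm X \<phi>) (Dk 1 F))) (act C (prd C X' X2) (sm X' \<phi>') (Dk 2 F))"
    if ph: "(\<phi>' = pr0 C X' X' \<and> \<phi> = pr0 C X X) \<or> (\<phi>' = pr1 C X' X' \<and> \<phi> = pr1 C X X)
      \<or> (\<phi>' = pls C (pr0 C X' X') (pr1 C X' X') \<and> \<phi> = pls C (pr0 C X X) (pr1 C X X))" for \<phi>' \<phi>
  proof -
    have p': "arr \<phi>'" "dm \<phi>' = X2" "cd \<phi>' = X'" using ph Xs by (auto simp: X2_def)
    have p: "arr \<phi>" "dm \<phi> = X'" "cd \<phi> = X" using ph X by (auto simp: X'_def)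
    have "act C (prd C X' X2) (sm X' \<phi>') (Dk 1 S) = pseq (act C (prd C X' X2) (sm X' \<phi>') (act C X2 Pq (Dk 1 F))) (act C (prd C X' X2) (sm X' \<phi>') (Dk 2 F))"
      unfolding S1 by (rule act_pseq[OF PqF1 F2]) (simp_all add: Xs p' X2_def)
    also have "act C (prd C X' X2) (sm X' \<phi>') (act C X2 Pq (Dk 1 F)) = act C (prd C X' X2) (cmp C (sm X' \<phi>') Pq) (Dk 1 F)"
      by (rule act_act[OF F1]) (simp_all add: Pq Xs p' X2_def)
    also have "... = act C (prd C X' X2) (cmp C r (sm X \<phi>)) (Dk 1 F)" using n2[OF ph] by simp
    also have "... = act C (prd C X' X2) r (act C (prd C X X') (sm X \<phi>) (Dk 1 F))"
      by (rule act_act[OF F1, symmetric]) (simp_all add: r X p X'_def)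
    finally show ?thesis .
  qed
  have d2: "act C (prd C X' X2) (sm X' (pls C (pr0 C X' X') (pr1 C X' X'))) (Dk 1 S)
     = seq_add C (act C (prd C X' X2) (sm X' (pr0 C X' X')) (Dk 1 S))
                 (act C (prd C X' X2) (sm X' (pr1 C X' X')) (Dk 1 S))"
  proof -
    define X3 where "X3 = prd C X X'"
    have s0: "pre_D_seq C X3 B (act C X3 (sm X (pr0 C X X)) (Dk 1 F))"
      by (rule pre_act[OF F1]) (simp_all add: X X3_def X'_def)
    have s1: "pre_D_seq C X3 B (act C X3 (sm X (pr1 C X X)) (Dk 1 F))"
      by (rule pre_act[OF F1]) (simp_all add: X X3_def X'_def)
    have rs0: "pre_D_seq C (prd C X' X2) B (act C (prd C X' X2) r (act C X3 (sm X (pr0 C X X)) (Dk 1 F)))"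
      by (rule pre_act[OF s0]) (simp_all add: r X3_def)
    have rs1: "pre_D_seq C (prd C X' X2) B (act C (prd C X' X2) r (act C X3 (sm X (pr1 C X X)) (Dk 1 F)))"
      by (rule pre_act[OF s1]) (simp_all add: r X3_def)
    have t0: "pre_D_seq C (prd C X' X2) B (act C (prd C X' X2) (sm X' (pr0 C X' X')) (Dk 2 F))"
      by (rule pre_act[OF F2]) (simp_all add: Xs X2_def)
    have t1: "pre_D_seq C (prd C X' X2) B (act C (prd C X' X2) (sm X' (pr1 C X' X')) (Dk 2 F))"
      by (rule pre_act[OF F2]) (simp_all add: Xs X2_def)
    have "act C (prd C X' X2) (sm X' (pls C (pr0 C X' X') (pr1 C X' X'))) (Dk 1 S)
       = pseq (act C (prd C X' X2) r (seq_add C (act C X3 (sm X (pr0 C X X)) (Dk 1 F)) (act C X3 (sm X (pr1 C X X)) (Dk 1 F))))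
              (seq_add C (act C (prd C X' X2) (sm X' (pr0 C X' X')) (Dk 2 F)) (act C (prd C X' X2) (sm X' (pr1 C X' X')) (Dk 2 F)))"
      using gen[of "pls C (pr0 C X' X') (pr1 C X' X')" "pls C (pr0 C X X) (pr1 C X X)"] DF_2 DF1_2
      by (simp add: X3_def X2_def)
    also have "act C (prd C X' X2) r (seq_add C (act C X3 (sm X (pr0 C X X)) (Dk 1 F)) (act C X3 (sm X (pr1 C X X)) (Dk 1 F)))
       = seq_add C (act C (prd C X' X2) r (act C X3 (sm X (pr0 C X X)) (Dk 1 F))) (act C (prd C X' X2) r (act C X3 (sm X (pr1 C X X)) (Dk 1 F)))"
      by (rule act_add[OF s0 s1]) (simp_all add: r X3_def)
    also have "pseq (seq_add C (act C (prd C X' X2) r (act C X3 (sm X (pr0 C X X)) (Dk 1 F))) (act C (prd C X' X2) r (act C X3 (sm X (pr1 C X X)) (Dk 1 F))))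
              (seq_add C (act C (prd C X' X2) (sm X' (pr0 C X' X')) (Dk 2 F)) (act C (prd C X' X2) (sm X' (pr1 C X' X')) (Dk 2 F)))
       = seq_add C (pseq (act C (prd C X' X2) r (act C X3 (sm X (pr0 C X X)) (Dk 1 F))) (act C (prd C X' X2) (sm X' (pr0 C X' X')) (Dk 2 F)))
                   (pseq (act C (prd C X' X2) r (act C X3 (sm X (pr1 C X X)) (Dk 1 F))) (act C (prd C X' X2) (sm X' (pr1 C X' X')) (Dk 2 F)))"
      by (rule pseq_add[OF rs0 rs1 t0 t1])
    also have "... = seq_add C (act C (prd C X' X2) (sm X' (pr0 C X' X')) (Dk 1 S))
                 (act C (prd C X' X2) (sm X' (pr1 C X' X')) (Dk 1 S))"
      using gen[of "pr0 C X' X'" "pr0 C X X"] gen[of "pr1 C X' X'" "pr1 C X X"] by (simp add: X3_def)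
    finally show ?thesis .
  qed
  have n3: "cmp C (lm X') PPq = cmp C Pq (lm X)"
    using q X by (simp add: lm_def i0m_def i1m_def PPq_def Pq_def Pmap_def X'_def X2_def qz)
  have d3: "act C X2 (lm X') (Dk 2 S) = Dk 1 S"
  proof -
    have "act C X2 (lm X') (Dk 2 S) = pseq (act C X2 (lm X') (act C X4 PPq (Dk 2 F))) (act C X2 (lm X') (Dk 3 F))"
      unfolding S2 by (rule act_pseq[OF PPqF2 F3]) (simp_all add: Xs X2_def X4_def)
    also have "act C X2 (lm X') (act C X4 PPq (Dk 2 F)) = act C X2 (cmp C (lm X') PPq) (Dk 2 F)"
      by (rule act_act[OF F2]) (simp_all add: PPq Xs X2_def X4_def)
    also have "... = act C X2 Pq (act C X' (lm X) (Dk 2 F))"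
      unfolding n3 by (rule act_act[OF F2, symmetric]) (simp_all add: Pq X X'_def X2_def)
    also note DF_3
    also note DF1_3
    finally show ?thesis using S1 by simp
  qed
  have n4: "cmp C (cm X') PPq = cmp C PPq (cm X)"
    using q X by (simp add: cm_def PPq_def Pq_def Pmap_def X'_def X2_def)
  have d4: "act C X4 (cm X') (Dk 2 S) = Dk 2 S"
  proof -
    have "act C X4 (cm X') (Dk 2 S) = pseq (act C X4 (cm X') (act C X4 PPq (Dk 2 F))) (act C X4 (cm X') (Dk 3 F))"
      unfolding S2 by (rule act_pseq[OF PPqF2 F3]) (simp_all add: Xs X2_def X4_def)
    also have "act C X4 (cm X') (act C X4 PPq (Dk 2 F)) = act C X4 (cmp C (cm X') PPq) (Dk 2 F)"
      by (rule act_act[OF F2]) (simp_all add: PPq Xs X2_def X4_def)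
    also have "... = act C X4 PPq (act C X2 (cm X) (Dk 2 F))"
      unfolding n4 by (rule act_act[OF F2, symmetric]) (simp_all add: PPq X X'_def X2_def X4_def)
    also note DF_4
    also note DF1_4
    finally show ?thesis using S2 by simp
  qed
  have "Dc X' (prd C B B) S"
    unfolding Dc_def X2_def[symmetric] X4_def[symmetric] using d1 d2 d3 d4 by blast
  then show ?thesis unfolding S_def X'_def .
qed


lemma lemB: assumes f: "D_seq C A B f" shows "D_seq C (prd C A A) (prd C B B) (Tseq C A f)"
proof -
  have pf: "pre_D_seq C A B f" and Df: "\<And>n. Dc (Pnob C n A) B (Dk n f)" using f D_seq_iff by blast+
  have A: "A \<in> Ob C" using pre_ob1[OF pf] .
  show ?thesis unfolding D_seq_iff
  proof (intro conjI allI)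
    show "pre_D_seq C (prd C A A) (prd C B B) (Tseq C A f)" using pre_T[OF pf] .
  next
    fix n
    define X where "X = Pnob C n A"
    define q where "q = Pnmap C n (prd C A A) (pr0 C A A)"
    have aq: "addv q" using addv_Pnmap[OF addv_pr0[OF A A], of n] A by (simp add: q_def)
    have q: "arr q" "dm q = prd C X X" "cd q = X" using A by (simp_all add: q_def X_def)
    have qz: "\<And>Z. Z \<in> Ob C \<Longrightarrow> cmp C (zro C Z (prd C X X)) q = zro C Z X"
      using aq q unfolding addv_def by metis
    have qa: "\<And>a b. arr a \<Longrightarrow> arr b \<Longrightarrow> dm a = dm b \<Longrightarrow> cd a = prd C X X \<Longrightarrow> cd b = prd C X X \<Longrightarrow>
        cmp C (pls C a b) q = pls C (cmp C a q) (cmp C b q)"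
      using aq q unfolding addv_def by metis
    have F: "pre_D_seq C X B (Dk n f)" unfolding X_def by (rule pre_Dk[OF pf])
    have DF: "Dc X B (Dk n f)" using Df X_def by simp
    have DF1: "Dc (prd C X X) B (Dk 1 (Dk n f))" using Df[of "Suc n"] X_def by (simp add: Dk_Dk)
    have eq: "Dk n (Tseq C A f) = pseq (act C (prd C X X) q (Dk n f)) (Dk 1 (Dk n f))"
      by (simp add: Tseq_eq Dk_pseq Dk_act Dk_Dk q_def X_def add.commute)
    have "Dc (prd C X X) (prd C B B) (pseq (act C (prd C X X) q (Dk n f)) (Dk 1 (Dk n f)))"
      by (rule B0[OF F DF DF1 q qz qa])
    then show "Dc (Pnob C n (prd C A A)) (prd C B B) (Dk n (Tseq C A f))"
      unfolding eq X_def by simp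
  qed
qed

lemma Titer_D: assumes f: "D_seq C A B f" shows "D_seq C (Pnob C n A) (Pnob C n B) (Titer C n A f)"
proof (induction n)
  case 0 then show ?case using f by simp
next
  case (Suc n)
  then show ?case using lemB[OF Suc] by simp
qed

lemma main: assumes f: "D_seq C A B f" and g: "D_seq C B E g"
  shows "D_seq C A E (seq_comp C A f g)"
proof -
  have pf: "pre_D_seq C A B f" using f D_seq_iff by blast
  have pg: "pre_D_seq C B E g" and Dg: "\<And>n. Dc (Pnob C n B) E (Dk n g)" using g D_seq_iff by blast+
  show ?thesis unfolding D_seq_iff
  proof (intro conjI allI)
    show "pre_D_seq C A E (seq_comp C A f g)" using pre_comp[OF pf pg] .
  next
    fix n
    have TD: "D_seq C (Pnob C n A) (Pnob C n B) (Titer C n A f)" using Titer_D[OF f] .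
    have G: "pre_D_seq C (Pnob C n A) (Pnob C n B) (Titer C n A f)" and
      DG: "Dc (Pnob C n A) (Pnob C n B) (Titer C n A f)"
      using TD unfolding D_seq_iff by (auto dest: spec[of _ 0])
    have K: "pre_D_seq C (Pnob C n B) E (Dk n g)" using pre_Dk[OF pg] .
    have "Dc (Pnob C n A) E (seq_comp C (Pnob C n A) (Titer C n A f) (Dk n g))"
      by (rule lemC[OF G K DG Dg])
    then show "Dc (Pnob C n A) E (Dk n (seq_comp C A f g))" by (simp add: Dk_comp)
  qed
qed

end

theorem lemma4p5:
  fixes C :: "('o, 'm) cla_struct"
  assumes "cartesian_left_additive C"
    and "D_seq C A B f"
    and "D_seq C B E g"
  shows "D_seq C A E (seq_comp C A f g)"
  using cartesian_left_additive.main[OF assms] .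

end
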